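(* Let $m,M$ be positive integers. Let $\Pi_{\mathcal{A}}^M=\{p_a(\mathbf{z}_1,\dots,\mathbf{z}_M):a\in\mathcal{A}\}$ be a family of densities on $\mathbb{R}^{mM}$ and $\mathcal{P}_{\mathcal{B}}^M=\{p_b(\mathbf{z}_t\mid\mathbf{z}_{t-1},\dots,\mathbf{z}_{t-M}):b\in\mathcal{B}\}$ a family of conditional densities, and assume: (c1) $p_a>0$ on $\mathbb{R}^{mM}$ for all $a\in\mathcal{A}$, and for every positive-measure $\mathcal{Y}\subset\mathbb{R}^{mM}$, $\Pi_{\mathcal{A}}^M$ is linearly independent under finite mixtures on $\mathcal{Y}$; (c2) the family $\mathcal{V}_{\mathcal{B}}=\{v_b(\mathbf{z},\mathbf{y}_M,\dots,\mathbf{y}_1):=p_b(\mathbf{z}_t=\mathbf{z}\mid\mathbf{z}_{t-1}=\mathbf{y}_M,\dots,\mathbf{z}_{t-M}=\mathbf{y}_1):b\in\mathcal{B}\}$ on $(\mathbb{R}^m)^{M+1}$ satisfies (b1), (b4), (b5) and (b6) with $d=m$. Define the trajectory family $\mathcal{P}^{T,M}_{\mathcal{A},\mathcal{B}}=\{p_a(\mathbf{z}_{1:M})\prod_{t=M+1}^Tp_{b_t}(\mathbf{z}_t\mid\mathbf{z}_{t-1},\dots,\mathbf{z}_{t-M}):a\in\mathcal{A},b_t\in\mathcal{B}\}$ on $\mathbb{R}^{mT}$. Then for any $T>M$, with $r=M$ if $T\equiv0\pmod M$ and $r=T\bmod M$ otherwise, and any set $\mathcal{Z}_r\subset(\mathbb{R}^m)^r$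 of positive measure, the trajectory family is linearly independent under finite mixtures on $(\mathbf{z}_{1:T-r},\mathbf{z}_{T-r+1:T})\in\mathbb{R}^{(T-r)m}\times\mathcal{Z}_r$.
   Context: Measures are Lebesgue; full measure means null complement. A family is linearly independent under finite mixtures on a set $D$ if every finite subfamily is linearly independent as functions on $D$. Conditions on $\mathcal{V}=\{v_b\}$ with $d=m$: (b1) $v_b>0$ everywhere. (b4) There is a full-measure $\mathcal{Y}\subset(\mathbb{R}^d)^M$ such that for all positive-measure $\mathcal{Y}'\subset\mathcal{Y}$ and $\mathcal{Z}\subset\mathbb{R}^d$, $\mathcal{V}$ is linearly independent under finite mixtures on $\mathcal{Z}\times\mathcal{Y}'$. (b5) For any $1\le\ell\le M$, $(\boldsymbol{\beta}_\ell,\dots,\boldsymbol{\beta}_1)\in(\mathbb{R}^d)^\ell$, positive-measure $\mathcal{Z}\subset\mathbb{R}^d$, $\mathcal{Y}\subset(\mathbb{R}^d)^{M-\ell}$ and finite $B_0\subset\mathcal{B}$: $\{v_b(\mathbf{z},\mathbf{y}_M,\dots,\mathbf{y}_{\ell+1},\boldsymbol{\beta}_\ell,\dots,\boldsymbol{\beta}_1):b\in B_0\}$ is linearly dependent on $\mathcal{Z}\times\mathcal{Y}$ only if there exist $b\ne b'\in B_0$ for which these functions coincide on all of $(\mathbb{R}^d)^{M-\ell+1}$. (b6) Each $v_b$ is continuous in $(\mathbf{y}_M,\dots,\mathbf{y}_1)$. *)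

theory Defs
  imports "HOL-Analysis.Analysis"
begin

text \<open>Points of (R^m)^k are represented as extensional functions on an index
set I of size k (a finite set of naturals), i.e. elements of PiE I UNIV.\<close>

definition Leb :: "nat set \<Rightarrow> (nat \<Rightarrow> 'x::euclidean_space) measure" where
  "Leb I = completion (PiM I (\<lambda>_. lborel))"

definition pos_meas :: "'x measure \<Rightarrow> 'x set \<Rightarrow> bool" where
  "pos_meas L S \<longleftrightarrow> S \<in> sets L \<and> emeasure L S > 0"

definition full_meas :: "'x measure \<Rightarrow> 'x set \<Rightarrow> bool" where
  "full_meas L S \<longleftrightarrow> S \<subseteq> space L \<and> space L - S \<in> null_sets L"

definition lin_indep_fm :: "('x \<Rightarrow> real) set \<Rightarrow> 'x set \<Rightarrow> bool" where
  "lin_indep_fm F D \<longleftrightarrow>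
     (\<forall>S c. S \<subseteq> F \<longrightarrow> finite S \<longrightarrow> (\<forall>x\<in>D. (\<Sum>f\<in>S. c f * f x) = 0) \<longrightarrow> (\<forall>f\<in>S. c f = 0))"

text \<open>Concatenation (z_{M},...,z_{l+1},beta_l,...,beta_1) of a free block y on
indices {l+1..M} and a fixed block beta on indices {1..l}.\<close>
definition merge_blk :: "nat \<Rightarrow> (nat \<Rightarrow> 'x) \<Rightarrow> (nat \<Rightarrow> 'x) \<Rightarrow> (nat \<Rightarrow> 'x)" where
  "merge_blk l beta y = (\<lambda>j. if j \<le> l then beta j else y j)"

text \<open>The trajectory density p_a(z_{1:M}) prod_{t=M+1}^T p_{b_t}(z_t | z_{t-1},...,z_{t-M}),
where v b z y = p_b(z_t = z | z_{t-1} = y_M, ..., z_{t-M} = y_1).\<close>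
definition traj :: "nat \<Rightarrow> nat \<Rightarrow> ((nat \<Rightarrow> 'x) \<Rightarrow> real) \<Rightarrow> (nat \<Rightarrow> 'x \<Rightarrow> (nat \<Rightarrow> 'x) \<Rightarrow> real)
                     \<Rightarrow> (nat \<Rightarrow> 'x) \<Rightarrow> real" where
  "traj M T pa vb z = pa (restrict z {1..M}) *
      (\<Prod>t\<in>{M+1..T}. vb t (z t) (\<lambda>j\<in>{1..M}. z (t - M - 1 + j)))"

end

theory Submission
  imports Defs
begin

lemma psf_lborel: "product_sigma_finite (\<lambda>_::nat. lborel::'x::euclidean_space measure)"
  by (simp add: product_sigma_finite_def lborel.sigma_finite_measure_axioms)

lemma distr_PiM_bij:
  fixes f :: "nat \<Rightarrow> nat"
  assumes finJ: "finite J" and bij: "bij_betw f J I"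
  shows "distr (PiM I (\<lambda>_. lborel::'x::euclidean_space measure)) (PiM J (\<lambda>_. lborel))
            (\<lambda>u. \<lambda>j\<in>J. u (f j)) = PiM J (\<lambda>_. lborel)"
proof -
  interpret product_sigma_finite "\<lambda>_::nat. lborel::'x measure" by (rule psf_lborel)
  have finI: "finite I" using bij finJ bij_betw_finite by blast
  let ?g = "the_inv_into J f"
  have meas: "(\<lambda>u. \<lambda>j\<in>J. u (f j)) \<in> measurable (PiM I (\<lambda>_. lborel::'x measure)) (PiM J (\<lambda>_. lborel))"
    using bij by (intro measurable_PiM_single') (auto simp: bij_betw_def space_PiM)
  show ?thesis
  proof (rule PiM_eqI[OF finJ])
    show "sets (distr (Pi\<^sub>M I (\<lambda>_. lborel)) (Pi\<^sub>M J (\<lambda>_. lborel)) (\<lambda>u. \<lambda>j\<in>J. u (f j))) = sets (Pi\<^sub>M J (\<lambda>_. lborel))"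
      by simp
    fix A :: "nat \<Rightarrow> 'x set" assume A: "\<And>i. i \<in> J \<Longrightarrow> A i \<in> sets lborel"
    have pre: "(\<lambda>u. \<lambda>j\<in>J. u (f j)) -` Pi\<^sub>E J A \<inter> space (Pi\<^sub>M I (\<lambda>_. lborel)) = Pi\<^sub>E I (\<lambda>i. A (?g i))"
    proof (intro set_eqI iffI)
      fix u assume u: "u \<in> (\<lambda>u. \<lambda>j\<in>J. u (f j)) -` Pi\<^sub>E J A \<inter> space (Pi\<^sub>M I (\<lambda>_. lborel))"
      show "u \<in> Pi\<^sub>E I (\<lambda>i. A (?g i))"
      proof (auto simp: PiE_iff)
        fix i assume "i \<in> I"
        then obtain j where j: "j \<in> J" "f j = i" using bij by (auto simp: bij_betw_def)
        then have "?g i = j" using bij by (auto simp: bij_betw_def the_inv_into_f_f)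
        then show "u i \<in> A (?g i)" using u j by (auto simp: PiE_iff)
      next
        show "u \<in> extensional I" using u by (auto simp: space_PiM PiE_iff)
      qed
    next
      fix u assume u: "u \<in> Pi\<^sub>E I (\<lambda>i. A (?g i))"
      have "\<And>j. j \<in> J \<Longrightarrow> u (f j) \<in> A j"
      proof -
        fix j assume j: "j \<in> J"
        have "f j \<in> I" using bij j by (auto simp: bij_betw_def)
        moreover have "?g (f j) = j" using bij j by (auto simp: bij_betw_def the_inv_into_f_f)
        ultimately show "u (f j) \<in> A j" using u by (metis PiE_iff)
      qed
      then show "u \<in> (\<lambda>u. \<lambda>j\<in>J. u (f j)) -` Pi\<^sub>E J A \<inter> space (Pi\<^sub>M I (\<lambda>_. lborel))"
        using u by (auto simp: space_PiM PiE_iff)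
    qed
    have gJ: "\<And>i. i \<in> I \<Longrightarrow> ?g i \<in> J"
      using bij by (auto simp: bij_betw_def the_inv_into_into)
    have "emeasure (distr (Pi\<^sub>M I (\<lambda>_. lborel)) (Pi\<^sub>M J (\<lambda>_. lborel)) (\<lambda>u. \<lambda>j\<in>J. u (f j))) (Pi\<^sub>E J A)
        = emeasure (Pi\<^sub>M I (\<lambda>_. lborel)) (Pi\<^sub>E I (\<lambda>i. A (?g i)))"
      using A meas finJ by (subst emeasure_distr) (auto simp: pre intro!: sets_PiM_I_finite)
    also have "\<dots> = (\<Prod>i\<in>I. emeasure lborel (A (?g i)))"
      using A gJ finI by (subst emeasure_PiM) auto
    also have "\<dots> = (\<Prod>j\<in>J. emeasure lborel (A j))"
    proof (rule prod.reindex_bij_betw[symmetric, where h=f, THEN trans])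
      show "bij_betw f J I" by fact
      show "(\<Prod>x\<in>J. emeasure lborel (A (?g (f x)))) = (\<Prod>j\<in>J. emeasure lborel (A j))"
        using bij by (intro prod.cong refl) (auto simp: bij_betw_def the_inv_into_f_f)
    qed
    finally show "emeasure (distr (Pi\<^sub>M I (\<lambda>_. lborel)) (Pi\<^sub>M J (\<lambda>_. lborel)) (\<lambda>u. \<lambda>j\<in>J. u (f j))) (Pi\<^sub>E J A)
        = (\<Prod>j\<in>J. emeasure lborel (A j))" .
  qed
qed

lemma emeasure_cyl:
  fixes I J :: "nat set"
  assumes IJ: "I \<inter> J = {}" and fin: "finite I" "finite J"
    and A: "A \<in> sets (PiM I (\<lambda>_. lborel::'x::euclidean_space measure))"
    and B: "B \<in> sets (PiM J (\<lambda>_. lborel::'x measure))"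
  shows "emeasure (PiM (I \<union> J) (\<lambda>_. lborel))
           {x \<in> PiE (I \<union> J) (\<lambda>_. UNIV). restrict x I \<in> A \<and> restrict x J \<in> B}
         = emeasure (PiM I (\<lambda>_. lborel)) A * emeasure (PiM J (\<lambda>_. lborel)) B"
proof -
  interpret product_sigma_finite "\<lambda>_::nat. lborel::'x measure" by (rule psf_lborel)
  interpret J: sigma_finite_measure "PiM J (\<lambda>_::nat. lborel::'x measure)"
    using fin(2) by (rule sigma_finite)
  let ?X = "{x \<in> PiE (I \<union> J) (\<lambda>_. UNIV). restrict x I \<in> A \<and> restrict x J \<in> B}"
  have X_eq: "?X = ((\<lambda>x. restrict x I) -` A \<inter> space (PiM (I \<union> J) (\<lambda>_. lborel::'x measure)))
      \<inter> ((\<lambda>x. restrict x J) -` B \<inter> space (PiM (I \<union> J) (\<lambda>_. lborel::'x measure)))"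
    by (auto simp: space_PiM)
  have Xs: "?X \<in> sets (PiM (I \<union> J) (\<lambda>_. lborel))"
    unfolding X_eq
    by (intro sets.Int measurable_sets[OF measurable_restrict_subset] A B) auto
  have pre: "merge I J -` ?X \<inter> space (PiM I (\<lambda>_. lborel) \<Otimes>\<^sub>M PiM J (\<lambda>_. lborel)) = A \<times> B"
  proof (intro set_eqI iffI)
    fix p assume p: "p \<in> merge I J -` ?X \<inter> space (PiM I (\<lambda>_. lborel) \<Otimes>\<^sub>M PiM J (\<lambda>_. lborel))"
    obtain x y where xy: "p = (x, y)" by force
    have x: "x \<in> PiE I (\<lambda>_. UNIV)" and y: "y \<in> PiE J (\<lambda>_. UNIV)"
      using p xy by (auto simp: space_pair_measure space_PiM)
    have "restrict (merge I J (x, y)) I = x"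
      using x IJ by (auto simp: merge_def restrict_def PiE_iff extensional_def fun_eq_iff)
    moreover have "restrict (merge I J (x, y)) J = y"
      using y IJ by (auto simp: merge_def restrict_def PiE_iff extensional_def fun_eq_iff)
    ultimately show "p \<in> A \<times> B" using p xy by auto
  next
    fix p assume p: "p \<in> A \<times> B"
    obtain x y where xy: "p = (x, y)" by force
    have x: "x \<in> PiE I (\<lambda>_. UNIV)" and y: "y \<in> PiE J (\<lambda>_. UNIV)"
      using p xy sets.sets_into_space[OF A] sets.sets_into_space[OF B] by (auto simp: space_PiM)
    have "restrict (merge I J (x, y)) I = x"
      using x IJ by (auto simp: merge_def restrict_def PiE_iff extensional_def fun_eq_iff)
    moreover have "restrict (merge I J (x, y)) J = y"
      using y IJ by (auto simp: merge_def restrict_def PiE_iff extensional_def fun_eq_iff)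
    moreover have "merge I J (x, y) \<in> PiE (I \<union> J) (\<lambda>_. UNIV)"
      using x y IJ by (auto simp: merge_def PiE_iff extensional_def)
    ultimately show "p \<in> merge I J -` ?X \<inter> space (PiM I (\<lambda>_. lborel) \<Otimes>\<^sub>M PiM J (\<lambda>_. lborel))"
      using p xy x y by (auto simp: space_pair_measure space_PiM)
  qed
  have "emeasure (PiM (I \<union> J) (\<lambda>_. lborel)) ?X
      = emeasure (distr (PiM I (\<lambda>_. lborel) \<Otimes>\<^sub>M PiM J (\<lambda>_. lborel)) (PiM (I \<union> J) (\<lambda>_. lborel)) (merge I J)) ?X"
    using distr_merge[OF IJ fin] by simp
  also have "\<dots> = emeasure (PiM I (\<lambda>_. lborel) \<Otimes>\<^sub>M PiM J (\<lambda>_. lborel)) (A \<times> B)"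
    unfolding pre[symmetric] using Xs by (intro emeasure_distr) auto
  also have "\<dots> = emeasure (PiM I (\<lambda>_. lborel)) A * emeasure (PiM J (\<lambda>_. lborel)) B"
    using A B by (rule J.emeasure_pair_measure_Times)
  finally show ?thesis .
qed

lemma closed_PiE_UNIV: "closed (PiE I (\<lambda>_. UNIV) :: (nat \<Rightarrow> 'x::t2_space) set)"
proof -
  have "PiE I (\<lambda>_. UNIV) = (\<Inter>i\<in>-I. {f :: nat \<Rightarrow> 'x. f i = undefined})"
    by (auto simp: PiE_iff extensional_def)
  moreover have "closed {f :: nat \<Rightarrow> 'x. f i = undefined}" for i
    by (intro closed_Collect_eq continuous_on_product_coordinates continuous_on_const)
  ultimately show ?thesis by auto
qed

lemma closed_in_PiM:
  fixes C :: "(nat \<Rightarrow> 'x::euclidean_space) set"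
  assumes "closed C"
  shows "C \<inter> PiE I (\<lambda>_. UNIV) \<in> sets (PiM I (\<lambda>_. lborel::'x measure))"
proof -
  have "C \<in> sets (borel :: (nat \<Rightarrow> 'x) measure)"
    using assms by (rule borel_closed)
  then have C: "C \<in> sets (PiM UNIV (\<lambda>_::nat. borel::'x measure))"
    by (simp only: sets_PiM_equal_borel)
  have comp: "(\<lambda>x. x i) \<in> measurable (PiM I (\<lambda>_. lborel::'x measure)) borel" for i
  proof (cases "i \<in> I")
    case True
    then have "(\<lambda>x. x i) \<in> measurable (PiM I (\<lambda>_. lborel::'x measure)) lborel"
      by (rule measurable_component_singleton)
    then show ?thesis by (simp only: measurable_lborel1)
  next
    case False
    have 1: "(\<lambda>_. undefined) \<in> measurable (PiM I (\<lambda>_. lborel::'x measure)) borel"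
      by (rule measurable_const) simp
    have 2: "\<And>x. x \<in> space (PiM I (\<lambda>_. lborel::'x measure)) \<Longrightarrow> undefined = x i"
      using False by (auto simp: space_PiM PiE_iff extensional_def)
    show ?thesis using measurable_cong[where f="\<lambda>_. undefined" and g="\<lambda>x. x i" and M="PiM I (\<lambda>_. lborel::'x measure)" and M'=borel] 2 1 by blast
  qed
  have "(\<lambda>x i. x i) \<in> measurable (PiM I (\<lambda>_. lborel::'x measure)) (PiM UNIV (\<lambda>_::nat. borel::'x measure))"
    by (rule measurable_PiM_single') (use comp in simp_all)
  then have "(\<lambda>x. x) -` C \<inter> space (PiM I (\<lambda>_. lborel::'x measure)) \<in> sets (PiM I (\<lambda>_. lborel))"
    using C by (simp only: measurable_sets)
  then show ?thesis by (simp add: space_PiM Int_commute)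
qed

lemma zero_set_sets:
  fixes g :: "'y \<Rightarrow> (nat \<Rightarrow> 'x::euclidean_space) \<Rightarrow> real"
  assumes "\<And>x. continuous_on (PiE I (\<lambda>_. UNIV)) (g x)"
  shows "{w \<in> PiE I (\<lambda>_. UNIV). \<forall>x. g x w = 0} \<in> sets (PiM I (\<lambda>_. lborel::'x measure))"
proof -
  have cl: "closed {w \<in> PiE I (\<lambda>_. UNIV). g x w = 0}" for x
    by (rule closedin_closed_trans[OF continuous_closedin_preimage_constant[OF assms] closed_PiE_UNIV])
  have eq: "{w \<in> PiE I (\<lambda>_. UNIV). \<forall>x. g x w = 0}
      = (\<Inter>x. {w \<in> PiE I (\<lambda>_. UNIV). g x w = 0}) \<inter> PiE I (\<lambda>_. UNIV)"
    by auto
  show ?thesis unfolding eq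
    by (rule closed_in_PiM) (use cl in auto)
qed

lemma fubini_section:
  fixes W :: "nat set" and t :: nat
  assumes finW: "finite W" and tW: "t \<notin> W"
    and Zs: "Z \<in> sets (PiM (insert t W) (\<lambda>_. lborel::'x::euclidean_space measure))"
    and Zpos: "emeasure (PiM (insert t W) (\<lambda>_. lborel::'x measure)) Z > 0"
  shows "\<exists>Wp. Wp \<in> sets (PiM W (\<lambda>_. lborel::'x measure)) \<and> emeasure (PiM W (\<lambda>_. lborel::'x measure)) Wp > 0
           \<and> (\<forall>w\<in>Wp. w \<in> PiE W (\<lambda>_. UNIV) \<and> {x. w(t:=x) \<in> Z} \<in> sets lborel \<and> emeasure lborel {x. w(t:=x) \<in> Z} > 0)"
proof -
  interpret product_sigma_finite "\<lambda>_::nat. lborel::'x measure" by (rule psf_lborel)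
  define g where "g w = (\<integral>\<^sup>+ x. indicator Z (w(t:=x)) \<partial>(lborel::'x measure))" for w :: "nat \<Rightarrow> 'x"
  have ind_m: "(\<lambda>u. indicator Z u :: ennreal) \<in> borel_measurable (PiM (insert t W) (\<lambda>_. lborel::'x measure))"
    using Zs by simp
  have fm: "(\<lambda>p. indicator Z ((\<lambda>(f, y). f(t := y)) p) :: ennreal) \<in> borel_measurable (PiM W (\<lambda>_. lborel) \<Otimes>\<^sub>M lborel)"
    using measurable_comp[OF measurable_add_dim ind_m] by (simp add: o_def)
  have "emeasure (PiM (insert t W) (\<lambda>_. lborel)) Z = (\<integral>\<^sup>+ u. indicator Z u \<partial>PiM (insert t W) (\<lambda>_. lborel::'x measure))"
    using Zs by simp
  also have "\<dots> = (\<integral>\<^sup>+ w. g w \<partial>PiM W (\<lambda>_. lborel::'x measure))"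
    unfolding g_def by (rule product_nn_integral_insert[OF finW tW ind_m])
  finally have intpos: "(\<integral>\<^sup>+ w. g w \<partial>PiM W (\<lambda>_. lborel::'x measure)) > 0" using Zpos by simp
  have gm: "g \<in> borel_measurable (PiM W (\<lambda>_. lborel::'x measure))"
    unfolding g_def using lborel.borel_measurable_nn_integral_fst[OF fm] by simp
  define Wp where "Wp = {w \<in> space (PiM W (\<lambda>_. lborel::'x measure)). g w > 0}"
  have Wps: "Wp \<in> sets (PiM W (\<lambda>_. lborel::'x measure))"
    unfolding Wp_def using gm by measurable
  have "emeasure (PiM W (\<lambda>_. lborel::'x measure)) Wp > 0"
  proof (rule ccontr)
    assume "\<not> ?thesis"
    then have "Wp \<in> null_sets (PiM W (\<lambda>_. lborel::'x measure))" using Wps by (simp add: null_sets_def)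
    then have "AE w in PiM W (\<lambda>_. lborel::'x measure). w \<notin> Wp" by (rule AE_not_in)
    then have "AE w in PiM W (\<lambda>_. lborel::'x measure). g w = 0"
      by (rule AE_mp) (auto simp: Wp_def intro!: AE_I2)
    then have "(\<integral>\<^sup>+ w. g w \<partial>PiM W (\<lambda>_. lborel::'x measure)) = 0"
      using gm by (simp add: nn_integral_0_iff_AE)
    then show False using intpos by simp
  qed
  moreover have "\<forall>w\<in>Wp. w \<in> PiE W (\<lambda>_. UNIV) \<and> {x. w(t:=x) \<in> Z} \<in> sets lborel \<and> emeasure lborel {x. w(t:=x) \<in> Z} > 0"
  proof
    fix w assume w: "w \<in> Wp"
    then have ws: "w \<in> space (PiM W (\<lambda>_. lborel::'x measure))" by (simp add: Wp_def)
    have um: "(\<lambda>x. w(t := x)) \<in> measurable lborel (PiM (insert t W) (\<lambda>_. lborel::'x measure))"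
      using measurable_component_update[OF ws tW] .
    have "(\<lambda>x. w(t := x)) -` Z \<inter> space lborel \<in> sets lborel"
      using um Zs by (rule measurable_sets)
    then have Ss: "{x. w(t:=x) \<in> Z} \<in> sets lborel" by (simp add: vimage_def)
    have "g w = emeasure lborel {x. w(t:=x) \<in> Z}"
    proof -
      have "g w = (\<integral>\<^sup>+ x. indicator {x. w(t:=x) \<in> Z} x \<partial>(lborel::'x measure))"
        unfolding g_def by (intro nn_integral_cong) (simp add: indicator_def)
      also have "\<dots> = emeasure lborel {x. w(t:=x) \<in> Z}"
        using Ss by (rule nn_integral_indicator)
      finally show ?thesis .
    qed
    then show "w \<in> PiE W (\<lambda>_. UNIV) \<and> {x. w(t:=x) \<in> Z} \<in> sets lborel \<and> emeasure lborel {x. w(t:=x) \<in> Z} > 0"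
      using w Ss ws by (auto simp: Wp_def space_PiM)
  qed
  ultimately show ?thesis using Wps by blast
qed

definition args :: "nat \<Rightarrow> nat \<Rightarrow> (nat \<Rightarrow> 'x) \<Rightarrow> (nat \<Rightarrow> 'x)" where
  "args M t z = (\<lambda>j\<in>{1..M}. z (t - M - 1 + j))"

lemma args_PiE[simp]: "args M t z \<in> PiE {1..M} (\<lambda>_. UNIV)"
  by (simp add: args_def)

lemma args_upd:
  assumes "M < t'" "t' \<le> t"
  shows "args M t' (merge_blk n0 \<beta> (w(t:=x))) = args M t' (merge_blk n0 \<beta> w)"
  using assms by (auto simp: args_def merge_blk_def restrict_def fun_eq_iff)

lemma args_merge_shift:
  assumes "M \<le> n0" "s < M" "l = M - s" "y \<in> PiE {l+1..M} (\<lambda>_. UNIV)"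
  shows "args M (n0 + Suc s) (merge_blk n0 \<beta> (\<lambda>i\<in>{n0+1..n0+s}. y (i - n0 + l)))
       = merge_blk l (\<lambda>j\<in>{1..l}. \<beta> (n0 - l + j)) y"
proof
  fix j
  show "args M (n0 + Suc s) (merge_blk n0 \<beta> (\<lambda>i\<in>{n0+1..n0+s}. y (i - n0 + l))) j
       = merge_blk l (\<lambda>j\<in>{1..l}. \<beta> (n0 - l + j)) y j"
  proof (cases "j \<in> {1..M}")
    case True
    have i: "n0 + Suc s - M - 1 + j = n0 - l + j" using assms True by auto
    show ?thesis
    proof (cases "j \<le> l")
      case True
      then show ?thesis using assms \<open>j \<in> {1..M}\<close> i by (auto simp: args_def merge_blk_def)
    next
      case False
      then have "n0 - l + j - n0 + l = j" "\<not> n0 - l + j \<le> n0" "n0 - l + j \<in> {n0+1..n0+s}"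
        using assms \<open>j \<in> {1..M}\<close> by auto
      then show ?thesis using assms \<open>j \<in> {1..M}\<close> i False by (auto simp: args_def merge_blk_def)
    qed
  next
    case False
    then show ?thesis using assms by (auto simp: args_def merge_blk_def PiE_iff extensional_def)
  qed
qed

lemma merge_blk_M: "A \<in> PiE {1..M} (\<lambda>_. UNIV) \<Longrightarrow> merge_blk M A (\<lambda>_. undefined) = A"
  by (auto simp: merge_blk_def fun_eq_iff PiE_iff extensional_def)

lemma cont_args: "continuous_on S (\<lambda>w. args M t (merge_blk n0 \<beta> w))"
proof (intro continuous_on_coordinatewise_then_product)
  fix j
  show "continuous_on S (\<lambda>w. args M t (merge_blk n0 \<beta> w) j)"
  proof (cases "j \<in> {1..M}")
    case True
    show ?thesis
    proof (cases "t - M - 1 + j \<le> n0")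
      case True
      then show ?thesis using \<open>j \<in> {1..M}\<close> by (simp add: args_def merge_blk_def continuous_on_const)
    next
      case False
      then show ?thesis using \<open>j \<in> {1..M}\<close>
        by (simp add: args_def merge_blk_def continuous_on_subset[OF continuous_on_product_coordinates])
    qed
  next
    case False
    then have "(\<lambda>w. args M t (merge_blk n0 \<beta> w) j) = (\<lambda>_. undefined)" by (auto simp: args_def)
    then show ?thesis by (metis continuous_on_const)
  qed
qed

lemma pos_meas_LebI:
  "S \<in> sets (PiM I (\<lambda>_. lborel)) \<Longrightarrow> emeasure (PiM I (\<lambda>_. lborel)) S > 0 \<Longrightarrow> pos_meas (Leb I) S"
  by (simp add: pos_meas_def Leb_def)

lemma pos_meas_lebesgueI:
  "S \<in> sets lborel \<Longrightarrow> emeasure lborel S > 0 \<Longrightarrow> pos_meas lebesgue S"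
  by (simp add: pos_meas_def)

lemma pos_meas_Leb_empty: "pos_meas (Leb {}) {\<lambda>_. undefined}"
  by (simp add: pos_meas_def Leb_def PiM_empty)

lemma pos_meas_UNIV: "pos_meas lebesgue (UNIV :: 'x::euclidean_space set)"
  by (simp add: pos_meas_def)

locale vset =
  fixes M :: nat and B :: "'b set" and v :: "'b \<Rightarrow> 'x::euclidean_space \<Rightarrow> (nat \<Rightarrow> 'x) \<Rightarrow> real"
  assumes M_pos: "0 < M"
  and b5: "\<forall>l beta Z Y B0 c. 1 \<le> l \<longrightarrow> l \<le> M \<longrightarrow> beta \<in> PiE {1..l} (\<lambda>_. UNIV) \<longrightarrow>
               pos_meas lebesgue Z \<longrightarrow> pos_meas (Leb {l+1..M}) Y \<longrightarrow>
               finite B0 \<longrightarrow> B0 \<subseteq> B \<longrightarrow>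
               (\<exists>b\<in>B0. c b \<noteq> (0::real)) \<longrightarrow>
               (\<forall>z\<in>Z. \<forall>y\<in>Y. (\<Sum>b\<in>B0. c b * v b z (merge_blk l beta y)) = 0) \<longrightarrow>
               (\<exists>b\<in>B0. \<exists>b'\<in>B0. b \<noteq> b' \<and>
                  (\<forall>z. \<forall>y\<in>PiE {l+1..M} (\<lambda>_. UNIV).
                     v b z (merge_blk l beta y) = v b' z (merge_blk l beta y)))"
  and b6: "\<forall>b\<in>B. \<forall>z. continuous_on (PiE {1..M} (\<lambda>_. UNIV)) (\<lambda>y. v b z y)"
begin

abbreviation PM :: "nat set \<Rightarrow> (nat \<Rightarrow> 'x) measure" where
  "PM I \<equiv> PiM I (\<lambda>_. lborel)"

definition ident :: "nat \<Rightarrow> (nat \<Rightarrow> 'x) \<Rightarrow> 'b \<Rightarrow> 'b \<Rightarrow> bool" where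
  "ident l \<beta> b b' \<longleftrightarrow> (\<forall>x. \<forall>y\<in>PiE {l+1..M} (\<lambda>_. UNIV). v b x (merge_blk l \<beta> y) = v b' x (merge_blk l \<beta> y))"

lemma ident_sym: "ident l \<beta> b b' \<Longrightarrow> ident l \<beta> b' b"
  by (auto simp: ident_def)

lemma block:
  fixes n0 :: nat and \<beta> :: "nat \<Rightarrow> 'x" and B0 :: "'b set"
  assumes n0: "M \<le> n0" and finB0: "finite B0" and B0B: "B0 \<subseteq> B"
    and \<beta>: "\<beta> \<in> PiE {1..n0} (\<lambda>_. UNIV)"
  shows "s \<le> M \<Longrightarrow>
     (\<forall>b\<in>B0. \<forall>b'\<in>B0. b \<noteq> b' \<longrightarrow> (\<forall>l. M - s < l \<longrightarrow> l \<le> M \<longrightarrow> \<not> ident l (\<lambda>j\<in>{1..l}. \<beta> (n0-l+j)) b b')) \<Longrightarrow>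
     Z \<in> sets (PM {n0+1..n0+s}) \<Longrightarrow> emeasure (PM {n0+1..n0+s}) Z > 0 \<Longrightarrow>
     (\<forall>u\<in>Z. (\<Sum>\<sigma>\<in>PiE {n0+1..n0+s} (\<lambda>_. B0). d \<sigma> *
          (\<Prod>t\<in>{n0+1..n0+s}. v (\<sigma> t) (u t) (args M t (merge_blk n0 \<beta> u)))) = 0) \<Longrightarrow>
     \<forall>\<sigma>\<in>PiE {n0+1..n0+s} (\<lambda>_. B0). d \<sigma> = 0"
proof (induction s arbitrary: d Z)
  case 0
  have "Z \<noteq> {}" using 0(4) by auto
  then obtain u where "u \<in> Z" by auto
  then show ?case using 0(5) by auto
next
  case (Suc s)
  define t where "t = n0 + Suc s"
  define W where "W = {n0+1..n0+s}"
  have IW: "{n0+1..n0+Suc s} = insert t W" by (auto simp: t_def W_def)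
  have tW: "t \<notin> W" and finW: "finite W" by (auto simp: t_def W_def)
  have sM: "s < M" using Suc.prems(1) by simp
  have Zs: "Z \<in> sets (PM (insert t W))" "emeasure (PM (insert t W)) Z > 0"
    using Suc.prems(3,4) IW by auto
  obtain Wp where Wps: "Wp \<in> sets (PM W)" and Wppos: "emeasure (PM W) Wp > 0"
    and Wp: "\<forall>w\<in>Wp. w \<in> PiE W (\<lambda>_. UNIV) \<and> {x. w(t:=x) \<in> Z} \<in> sets lborel \<and> emeasure lborel {x. w(t:=x) \<in> Z} > 0"
    using fubini_section[OF finW tW Zs] by blast
  define E where "E b b' = {w \<in> PiE W (\<lambda>_. UNIV). \<forall>x. v b x (args M t (merge_blk n0 \<beta> w)) - v b' x (args M t (merge_blk n0 \<beta> w)) = 0}" for b b'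
  have Es: "E b b' \<in> sets (PM W)" if "b \<in> B0" "b' \<in> B0" for b b'
    unfolding E_def
  proof (rule zero_set_sets)
    fix x
    have cb: "continuous_on (PiE W (\<lambda>_. UNIV)) (\<lambda>w. v c x (args M t (merge_blk n0 \<beta> w)))" if "c \<in> B" for c
      by (rule continuous_on_compose2[OF b6[rule_format, OF that] cont_args]) (auto simp: args_def)
    show "continuous_on (PiE W (\<lambda>_. UNIV)) (\<lambda>w. v b x (args M t (merge_blk n0 \<beta> w)) - v b' x (args M t (merge_blk n0 \<beta> w)))"
      using that B0B by (intro continuous_on_diff cb) auto
  qed
  have Enull: "emeasure (PM W) (E b b') = 0" if bb: "b \<in> B0" "b' \<in> B0" "b \<noteq> b'" for b b'
  proof (rule ccontr)
    assume Epos0: "emeasure (PM W) (E b b') \<noteq> 0"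
    define l where "l = M - s"
    have l: "1 \<le> l" "l \<le> M" using sM by (auto simp: l_def)
    define f where "f i = i - n0 + l" for i :: nat
    define h where "h y = (\<lambda>i\<in>W. y (f i))" for y :: "nat \<Rightarrow> 'x"
    have bij: "bij_betw f W {l+1..M}"
      by (rule bij_betw_byWitness[where f'="\<lambda>j. j - l + n0"]) (use sM in \<open>auto simp: W_def f_def l_def\<close>)
    have distr: "distr (PM {l+1..M}) (PM W) h = PM W"
      unfolding h_def by (rule distr_PiM_bij[OF finW bij])
    have hm: "h \<in> measurable (PM {l+1..M}) (PM W)"
      unfolding h_def using bij
      by (intro measurable_restrict measurable_component_singleton) (auto simp: bij_betw_def)
    define Y where "Y = h -` E b b' \<inter> space (PM {l+1..M})"
    have Ys: "Y \<in> sets (PM {l+1..M})"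
      unfolding Y_def using hm Es[OF bb(1,2)] by (rule measurable_sets)
    have "emeasure (PM W) (E b b') = emeasure (distr (PM {l+1..M}) (PM W) h) (E b b')"
      using distr by simp
    also have "\<dots> = emeasure (PM {l+1..M}) Y"
      unfolding Y_def by (rule emeasure_distr[OF hm Es[OF bb(1,2)]])
    finally have Ypos: "emeasure (PM {l+1..M}) Y > 0" using Epos0 by (simp add: zero_less_iff_neq_zero)
    define \<beta>s where "\<beta>s = (\<lambda>j\<in>{1..l}. \<beta> (n0 - l + j))"
    define c where "c x = (if x = b then 1 else - 1 :: real)" for x
    have eqY: "v b z (merge_blk l \<beta>s y) = v b' z (merge_blk l \<beta>s y)" if y: "y \<in> Y" for y z
    proof -
      have yP: "y \<in> PiE {l+1..M} (\<lambda>_. UNIV)" using y by (simp add: Y_def space_PiM)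
      have "h y \<in> E b b'" using y by (simp add: Y_def)
      then have "v b z (args M t (merge_blk n0 \<beta> (h y))) - v b' z (args M t (merge_blk n0 \<beta> (h y))) = 0"
        by (simp add: E_def)
      moreover have "args M t (merge_blk n0 \<beta> (h y)) = merge_blk l \<beta>s y"
        unfolding t_def h_def W_def f_def \<beta>s_def
        by (rule args_merge_shift[OF n0 sM l_def[THEN sym, symmetric] yP])
      ultimately show ?thesis by simp
    qed
    have "\<exists>b1\<in>{b,b'}. \<exists>b2\<in>{b,b'}. b1 \<noteq> b2 \<and>
                  (\<forall>z. \<forall>y\<in>PiE {l+1..M} (\<lambda>_. UNIV).
                     v b1 z (merge_blk l \<beta>s y) = v b2 z (merge_blk l \<beta>s y))"
    proof (rule b5[rule_format, of l \<beta>s UNIV Y "{b,b'}" c])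
      show "1 \<le> l" "l \<le> M" by (fact l)+
      show "\<beta>s \<in> PiE {1..l} (\<lambda>_. UNIV)" by (simp add: \<beta>s_def)
      show "pos_meas lebesgue (UNIV :: 'x set)" by (rule pos_meas_UNIV)
      show "pos_meas (Leb {l+1..M}) Y" by (rule pos_meas_LebI[OF Ys Ypos])
      show "finite {b, b'}" by simp
      show "{b, b'} \<subseteq> B" using bb B0B by auto
      show "\<exists>x\<in>{b, b'}. c x \<noteq> 0" by (auto simp: c_def)
      show "(\<Sum>x\<in>{b, b'}. c x * v x z (merge_blk l \<beta>s y)) = 0" if "z \<in> UNIV" "y \<in> Y" for z y
        using bb(3) eqY[OF that(2)] by (simp add: c_def)
    qed
    then have "ident l \<beta>s b b'" using bb(3) by (auto simp: ident_def)
    moreover have "M - Suc s < l" using sM by (simp add: l_def)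
    then have "\<not> ident l (\<lambda>j\<in>{1..l}. \<beta> (n0-l+j)) b b'" using Suc.prems(2) bb l by blast
    ultimately show False by (simp only: \<beta>s_def)
  qed
  define NE where "NE = (\<Union>b\<in>B0. \<Union>b'\<in>B0 - {b}. E b b')"
  have NEnull: "NE \<in> null_sets (PM W)"
    unfolding NE_def using finB0 Es Enull
    by (intro null_sets.finite_UN) (auto simp: null_sets_def)
  define Wg where "Wg = Wp - NE"
  have Wgs: "Wg \<in> sets (PM W)" using Wps NEnull by (auto simp: Wg_def)
  have Wgpos: "emeasure (PM W) Wg > 0"
    using Wppos emeasure_Diff_null_set[OF NEnull Wps] by (simp add: Wg_def)
  have e0: "(\<Sum>\<sigma>'\<in>PiE W (\<lambda>_. B0). d (\<sigma>'(t:=b)) * (\<Prod>t'\<in>W. v (\<sigma>' t') (w t') (args M t' (merge_blk n0 \<beta> w)))) = 0"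
    if w: "w \<in> Wg" and b: "b \<in> B0" for w b
  proof -
    define e where "e b = (\<Sum>\<sigma>'\<in>PiE W (\<lambda>_. B0). d (\<sigma>'(t:=b)) * (\<Prod>t'\<in>W. v (\<sigma>' t') (w t') (args M t' (merge_blk n0 \<beta> w))))" for b
    define A where "A = args M t (merge_blk n0 \<beta> w)"
    define S where "S = {x. w(t:=x) \<in> Z}"
    have wP: "w \<in> PiE W (\<lambda>_. UNIV)" "S \<in> sets lborel" "emeasure lborel S > 0"
      using Wp w by (auto simp: Wg_def S_def)
    have key: "(\<Sum>b\<in>B0. e b * v b x A) = 0" if x: "x \<in> S" for x
    proof -
      have uZ: "w(t:=x) \<in> Z" using x by (simp add: S_def)
      let ?F = "\<lambda>\<sigma>. d \<sigma> * (\<Prod>t'\<in>insert t W. v (\<sigma> t') ((w(t:=x)) t') (args M t' (merge_blk n0 \<beta> (w(t:=x)))))"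
      have h5: "(\<Sum>\<sigma>\<in>PiE {n0+1..n0+Suc s} (\<lambda>_. B0). d \<sigma> * (\<Prod>t'\<in>{n0+1..n0+Suc s}. v (\<sigma> t') ((w(t:=x)) t') (args M t' (merge_blk n0 \<beta> (w(t:=x)))))) = 0"
        using Suc.prems(5) uZ by blast
      have "0 = (\<Sum>\<sigma>\<in>PiE (insert t W) (\<lambda>_. B0). ?F \<sigma>)"
        using h5 by (simp only: IW)
      also have "\<dots> = (\<Sum>p\<in>B0 \<times> PiE W (\<lambda>_. B0). ?F ((\<lambda>(y, g). g(t := y)) p))"
        unfolding PiE_insert_eq by (simp only: sum.reindex[OF inj_combinator[where T="\<lambda>_. B0", OF tW]] o_def)
      also have "\<dots> = (\<Sum>p\<in>B0 \<times> PiE W (\<lambda>_. B0). v (fst p) x A * (d ((snd p)(t := fst p)) *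
                     (\<Prod>t'\<in>W. v (snd p t') (w t') (args M t' (merge_blk n0 \<beta> w)))))"
      proof (rule sum.cong[OF refl])
        fix p assume p: "p \<in> B0 \<times> PiE W (\<lambda>_. B0)"
        obtain b g where pbg: "p = (b, g)" by force
        have a1: "args M t (merge_blk n0 \<beta> (w(t:=x))) = A"
          unfolding A_def using n0 by (intro args_upd) (auto simp: t_def)
        have a2: "args M t' (merge_blk n0 \<beta> (w(t:=x))) = args M t' (merge_blk n0 \<beta> w)" if "t' \<in> W" for t'
          using that n0 by (intro args_upd) (auto simp: t_def W_def)
        have "(\<Prod>t'\<in>insert t W. v ((g(t:=b)) t') ((w(t:=x)) t') (args M t' (merge_blk n0 \<beta> (w(t:=x)))))
            = v b x A * (\<Prod>t'\<in>W. v ((g(t:=b)) t') ((w(t:=x)) t') (args M t' (merge_blk n0 \<beta> (w(t:=x)))))"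
          using finW tW a1 by (simp add: prod.insert)
        also have "(\<Prod>t'\<in>W. v ((g(t:=b)) t') ((w(t:=x)) t') (args M t' (merge_blk n0 \<beta> (w(t:=x)))))
            = (\<Prod>t'\<in>W. v (g t') (w t') (args M t' (merge_blk n0 \<beta> w)))"
          using tW a2 by (intro prod.cong refl) auto
        finally have calc: "(\<Prod>t'\<in>insert t W. v ((g(t:=b)) t') ((w(t:=x)) t') (args M t' (merge_blk n0 \<beta> (w(t:=x)))))
            = v b x A * (\<Prod>t'\<in>W. v (g t') (w t') (args M t' (merge_blk n0 \<beta> w)))" .
        have "?F ((\<lambda>(y, g). g(t := y)) p) = d (g(t:=b)) * (\<Prod>t'\<in>insert t W. v ((g(t:=b)) t') ((w(t:=x)) t') (args M t' (merge_blk n0 \<beta> (w(t:=x)))))"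
          by (simp only: pbg prod.case)
        also have "\<dots> = d (g(t:=b)) * (v b x A * (\<Prod>t'\<in>W. v (g t') (w t') (args M t' (merge_blk n0 \<beta> w))))"
          by (simp only: calc)
        also have "\<dots> = v (fst p) x A * (d ((snd p)(t := fst p)) *
                     (\<Prod>t'\<in>W. v (snd p t') (w t') (args M t' (merge_blk n0 \<beta> w))))"
          by (simp only: pbg fst_conv snd_conv mult.left_commute)
        finally show "?F ((\<lambda>(y, g). g(t := y)) p) = v (fst p) x A * (d ((snd p)(t := fst p)) *
                     (\<Prod>t'\<in>W. v (snd p t') (w t') (args M t' (merge_blk n0 \<beta> w))))" .
      qed
      also have "\<dots> = (\<Sum>b\<in>B0. \<Sum>g\<in>PiE W (\<lambda>_. B0). v b x A * (d (g(t := b)) *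
                     (\<Prod>t'\<in>W. v (g t') (w t') (args M t' (merge_blk n0 \<beta> w)))))"
        by (simp only: sum.cartesian_product split_def)
      also have "\<dots> = (\<Sum>b\<in>B0. e b * v b x A)"
        by (simp add: e_def sum_distrib_left sum_distrib_right mult.commute)
      finally show ?thesis by simp
    qed
    show ?thesis
    proof (rule ccontr)
      assume ne: "\<not> ?thesis"
      have "\<exists>b1\<in>B0. \<exists>b2\<in>B0. b1 \<noteq> b2 \<and>
                  (\<forall>z. \<forall>y\<in>PiE {M+1..M} (\<lambda>_. UNIV).
                     v b1 z (merge_blk M A y) = v b2 z (merge_blk M A y))"
      proof (rule b5[rule_format, of M A S "{\<lambda>_. undefined}" B0 e])
        show "1 \<le> M" using M_pos by simp
        show "M \<le> M" by simp
        show "A \<in> PiE {1..M} (\<lambda>_. UNIV)" unfolding A_def by (rule args_PiE)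
        show "pos_meas lebesgue S" by (rule pos_meas_lebesgueI[OF wP(2,3)])
        show "pos_meas (Leb {M+1..M}) {\<lambda>_. undefined}" using pos_meas_Leb_empty by simp
        show "finite B0" by (fact finB0)
        show "B0 \<subseteq> B" by (fact B0B)
        show "\<exists>b\<in>B0. e b \<noteq> 0" using ne b by (auto simp: e_def)
        show "(\<Sum>b\<in>B0. e b * v b z (merge_blk M A y)) = 0" if "z \<in> S" "y \<in> {\<lambda>_. undefined}" for z y
          using key[OF that(1)] that(2) by (simp add: merge_blk_M[OF args_PiE] A_def)
      qed
      then obtain b1 b2 where b12: "b1 \<in> B0" "b2 \<in> B0" "b1 \<noteq> b2"
        and eq: "\<forall>z. \<forall>y\<in>PiE {M+1..M} (\<lambda>_. UNIV). v b1 z (merge_blk M A y) = v b2 z (merge_blk M A y)"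
        by blast
      have "\<forall>z. v b1 z A = v b2 z A"
        using eq by (simp add: merge_blk_M[OF args_PiE] A_def)
      then have "w \<in> E b1 b2" using wP(1) by (simp add: E_def A_def)
      then have "w \<in> NE" using b12 by (auto simp: NE_def)
      then show False using w by (simp add: Wg_def)
    qed
  qed
  have all0: "\<forall>\<sigma>'\<in>PiE W (\<lambda>_. B0). d (\<sigma>'(t:=b)) = 0" if b: "b \<in> B0" for b
  proof -
    have "\<forall>\<sigma>'\<in>PiE {n0+1..n0+s} (\<lambda>_. B0). d (\<sigma>'(t:=b)) = 0"
    proof (rule Suc.IH)
      show "s \<le> M" using sM by simp
      show "\<forall>b\<in>B0. \<forall>b'\<in>B0. b \<noteq> b' \<longrightarrow> (\<forall>l. M - s < l \<longrightarrow> l \<le> M \<longrightarrow> \<not> ident l (\<lambda>j\<in>{1..l}. \<beta> (n0-l+j)) b b')"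
      proof (intro ballI impI allI)
        fix b b' l assume h: "b\<in>B0" "b'\<in>B0" "b\<noteq>b'" "M - s < l" "l \<le> M"
        moreover have "M - Suc s < l" using h(4) by linarith
        ultimately show "\<not> ident l (\<lambda>j\<in>{1..l}. \<beta> (n0-l+j)) b b'" using Suc.prems(2) by blast
      qed
      show "Wg \<in> sets (PM {n0+1..n0+s})" using Wgs by (simp add: W_def)
      show "emeasure (PM {n0+1..n0+s}) Wg > 0" using Wgpos by (simp add: W_def)
      show "\<forall>u\<in>Wg. (\<Sum>\<sigma>\<in>PiE {n0+1..n0+s} (\<lambda>_. B0). d (\<sigma>(t:=b)) *
          (\<Prod>t\<in>{n0+1..n0+s}. v (\<sigma> t) (u t) (args M t (merge_blk n0 \<beta> u)))) = 0"
        using e0 b by (simp add: W_def)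
    qed
    then show ?thesis by (simp add: W_def)
  qed
  show ?case
  proof
    fix \<sigma> assume \<sigma>: "\<sigma> \<in> PiE {n0+1..n0+Suc s} (\<lambda>_. B0)"
    then have "\<sigma>(t:=undefined) \<in> PiE W (\<lambda>_. B0)" "\<sigma> t \<in> B0"
      using IW tW by (auto simp: PiE_iff extensional_def)
    moreover have "\<sigma> = (\<sigma>(t:=undefined))(t := \<sigma> t)" by simp
    ultimately show "d \<sigma> = 0" using all0 by metis
  qed
qed

end

lemma space_PM_pos:
  "finite I \<Longrightarrow> emeasure (PiM I (\<lambda>_::nat. lborel::'x::euclidean_space measure)) (PiE I (\<lambda>_. UNIV)) \<noteq> 0"
proof -
  assume fin: "finite I"
  interpret product_sigma_finite "\<lambda>_::nat. lborel::'x measure" by (rule psf_lborel)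
  have "emeasure (PiM I (\<lambda>_::nat. lborel::'x measure)) (PiE I (\<lambda>_. UNIV)) = (\<Prod>i\<in>I. emeasure lborel (UNIV::'x set))"
    using fin by (subst emeasure_PiM) auto
  then show ?thesis using fin by (simp add: prod_zero_iff)
qed

lemma space_PM_inf:
  "finite I \<Longrightarrow> I \<noteq> {} \<Longrightarrow> emeasure (PiM I (\<lambda>_::nat. lborel::'x::euclidean_space measure)) (PiE I (\<lambda>_. UNIV)) = \<infinity>"
proof -
  assume fin: "finite I" and ne: "I \<noteq> {}"
  interpret product_sigma_finite "\<lambda>_::nat. lborel::'x measure" by (rule psf_lborel)
  have "emeasure (PiM I (\<lambda>_::nat. lborel::'x measure)) (PiE I (\<lambda>_. UNIV)) = (\<Prod>i\<in>I. emeasure lborel (UNIV::'x set))"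
    using fin by (subst emeasure_PiM) auto
  also have "\<dots> = \<infinity>" using fin ne by (simp add: power_eq_top_ennreal card_eq_0_iff)
  finally show ?thesis .
qed

lemma merge_blk_restrict:
  "y \<in> PiE {1..M} (\<lambda>_. UNIV) \<Longrightarrow> merge_blk l (restrict y {1..l}) (restrict y {l+1..M}) = y"
  by (auto simp: merge_blk_def fun_eq_iff PiE_iff extensional_def)

lemma cont_merge: "continuous_on S (\<lambda>u. merge_blk l u y)"
proof (intro continuous_on_coordinatewise_then_product)
  fix j
  show "continuous_on S (\<lambda>u. merge_blk l u y j)"
    by (cases "j \<le> l") (simp_all add: merge_blk_def continuous_on_const
        continuous_on_subset[OF continuous_on_product_coordinates])
qed

locale vset4 = vset M B v for M :: nat and B :: "'b set" and v :: "'b \<Rightarrow> 'x::euclidean_space \<Rightarrow> (nat \<Rightarrow> 'x) \<Rightarrow> real" +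
  assumes b4: "\<exists>Y. full_meas (Leb {1..M}) Y \<and>
               (\<forall>Y' Z. Y' \<subseteq> Y \<longrightarrow> pos_meas (Leb {1..M}) Y' \<longrightarrow> pos_meas lebesgue Z \<longrightarrow>
                  lin_indep_fm
                    ((\<lambda>b. restrict (\<lambda>(z, y). v b z y) (UNIV \<times> PiE {1..M} (\<lambda>_. UNIV))) ` B)
                    (Z \<times> Y'))"
begin

definition R :: "'b \<Rightarrow> ('x \<times> (nat \<Rightarrow> 'x)) \<Rightarrow> real" where
  "R b = restrict (\<lambda>(z, y). v b z y) (UNIV \<times> PiE {1..M} (\<lambda>_. UNIV))"

lemma H_null:
  assumes bB: "b \<in> B" "b' \<in> B" and Rne: "R b \<noteq> R b'"
  shows "emeasure (PM {1..M}) {y \<in> PiE {1..M} (\<lambda>_. UNIV). \<forall>x. v b x y - v b' x y = 0} = 0"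
    (is "emeasure _ ?H = 0")
proof (rule ccontr)
  assume Hne: "emeasure (PM {1..M}) ?H \<noteq> 0"
  have Hs: "?H \<in> sets (PM {1..M})"
    by (rule zero_set_sets) (use bB b6 in \<open>auto intro!: continuous_on_diff\<close>)
  obtain Y where Yf: "full_meas (Leb {1..M}) Y" and Yind: "\<forall>Y' Z. Y' \<subseteq> Y \<longrightarrow> pos_meas (Leb {1..M}) Y' \<longrightarrow> pos_meas lebesgue Z \<longrightarrow>
                  lin_indep_fm ((\<lambda>b. R b) ` B) (Z \<times> Y')"
    using b4 unfolding R_def by blast
  let ?L = "Leb {1..M} :: (nat \<Rightarrow> 'x) measure"
  have spL: "space ?L = PiE {1..M} (\<lambda>_. UNIV)" by (simp add: Leb_def space_PiM)
  have N: "space ?L - Y \<in> null_sets ?L" and YL: "Y \<subseteq> space ?L" using Yf by (auto simp: full_meas_def)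
  have HL: "?H \<in> sets ?L" using Hs by (simp add: Leb_def)
  have eqHY: "?H \<inter> Y = ?H - (space ?L - Y)" using YL spL by auto
  have "emeasure ?L (?H \<inter> Y) = emeasure ?L ?H"
    unfolding eqHY by (rule emeasure_Diff_null_set[OF N HL])
  also have "\<dots> = emeasure (PM {1..M}) ?H" using Hs by (simp add: Leb_def)
  finally have pos: "emeasure ?L (?H \<inter> Y) > 0" using Hne by (simp add: zero_less_iff_neq_zero)
  have HYs: "?H \<inter> Y \<in> sets ?L" unfolding eqHY using HL N by auto
  have "lin_indep_fm ((\<lambda>b. R b) ` B) (UNIV \<times> (?H \<inter> Y))"
    using Yind pos HYs pos_meas_UNIV by (auto simp: pos_meas_def)
  then have li: "\<forall>S c. S \<subseteq> R ` B \<longrightarrow> finite S \<longrightarrow> (\<forall>x\<in>UNIV \<times> (?H \<inter> Y). (\<Sum>f\<in>S. c f * f x) = 0) \<longrightarrow> (\<forall>f\<in>S. c f = 0)"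
    by (simp add: lin_indep_fm_def)
  define c where "c f = (if f = R b then 1 else -1 :: real)" for f
  have "c (R b) = 0"
  proof (rule li[rule_format, of "{R b, R b'}" c "R b"])
    show "R b \<in> {R b, R b'}" by simp
    show "{R b, R b'} \<subseteq> R ` B" using bB by auto
    show "finite {R b, R b'}" by simp
    fix p :: "'x \<times> (nat \<Rightarrow> 'x)" assume p: "p \<in> UNIV \<times> (?H \<inter> Y)"
    obtain z y where zy: "p = (z, y)" by force
    have "y \<in> ?H" using p zy by auto
    then have "R b (z, y) = R b' (z, y)" by (auto simp: R_def)
    then show "(\<Sum>f\<in>{R b, R b'}. c f * f p) = 0" using Rne zy by (simp add: c_def)
  qed
  then show False by (simp add: c_def)
qed

end

lemma cyl_sets:
  fixes I J :: "nat set"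
  assumes A: "A \<in> sets (PiM I (\<lambda>_. lborel::'x::euclidean_space measure))"
    and B: "B \<in> sets (PiM J (\<lambda>_. lborel::'x measure))" and "I \<subseteq> K" "J \<subseteq> K"
  shows "{x \<in> PiE K (\<lambda>_. UNIV). restrict x I \<in> A \<and> restrict x J \<in> B} \<in> sets (PiM K (\<lambda>_. lborel::'x measure))"
proof -
  have X_eq: "{x \<in> PiE K (\<lambda>_. UNIV). restrict x I \<in> A \<and> restrict x J \<in> B} = ((\<lambda>x. restrict x I) -` A \<inter> space (PiM K (\<lambda>_. lborel::'x measure)))
      \<inter> ((\<lambda>x. restrict x J) -` B \<inter> space (PiM K (\<lambda>_. lborel::'x measure)))"
    by (auto simp: space_PiM)
  show ?thesis
    unfolding X_eq
    by (intro sets.Int measurable_sets[OF measurable_restrict_subset] A B) (use assms in auto)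
qed

lemma PiE_UNIV_sets[simp]: "PiE I (\<lambda>_. UNIV) \<in> sets (PiM I (\<lambda>_. lborel::'x::euclidean_space measure))"
proof -
  have "space (PiM I (\<lambda>_. lborel::'x measure)) = PiE I (\<lambda>_. UNIV)" by (simp add: space_PiM)
  then show ?thesis by (metis sets.top)
qed

lemma merge_blk_PiE:
  "u \<in> PiE {1..l} (\<lambda>_. UNIV) \<Longrightarrow> y \<in> PiE {l+1..M} (\<lambda>_. UNIV) \<Longrightarrow> l \<le> M \<Longrightarrow> merge_blk l u y \<in> PiE {1..M} (\<lambda>_. UNIV)"
  by (auto simp: merge_blk_def PiE_iff extensional_def)

context vset4
begin

lemma H_sets: "b \<in> B \<Longrightarrow> b' \<in> B \<Longrightarrow> {y \<in> PiE {1..M} (\<lambda>_. UNIV). \<forall>x. v b x y - v b' x y = 0} \<in> sets (PM {1..M})"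
  by (rule zero_set_sets) (use b6 in \<open>auto intro!: continuous_on_diff\<close>)

lemma K_null:
  assumes bB: "b \<in> B" "b' \<in> B" "R b \<noteq> R b'" and l: "1 \<le> l" "l \<le> M"
  shows "{u \<in> PiE {1..l} (\<lambda>_. UNIV). ident l u b b'} \<in> sets (PM {1..l})
       \<and> emeasure (PM {1..l}) {u \<in> PiE {1..l} (\<lambda>_. UNIV). ident l u b b'} = 0"
proof -
  let ?K = "{u \<in> PiE {1..l} (\<lambda>_. UNIV). ident l u b b'}"
  define g where "g p u = (if snd p \<in> PiE {l+1..M} (\<lambda>_. UNIV)
      then v b (fst p) (merge_blk l u (snd p)) - v b' (fst p) (merge_blk l u (snd p)) else 0)"
    for p :: "'x \<times> (nat \<Rightarrow> 'x)" and u
  have Keq: "?K = {u \<in> PiE {1..l} (\<lambda>_. UNIV). \<forall>p. g p u = 0}"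
    by (auto simp: ident_def g_def)
  have Ks: "?K \<in> sets (PM {1..l})"
    unfolding Keq
  proof (rule zero_set_sets)
    fix p :: "'x \<times> (nat \<Rightarrow> 'x)"
    show "continuous_on (PiE {1..l} (\<lambda>_. UNIV)) (g p)"
    proof (cases "snd p \<in> PiE {l+1..M} (\<lambda>_. UNIV)")
      case True
      have c: "continuous_on (PiE {1..l} (\<lambda>_. UNIV)) (\<lambda>u. v c (fst p) (merge_blk l u (snd p)))" if "c \<in> B" for c
      proof (rule continuous_on_compose2[OF b6[rule_format, OF that] cont_merge])
        show "(\<lambda>u. merge_blk l u (snd p)) ` PiE {1..l} (\<lambda>_. UNIV) \<subseteq> PiE {1..M} (\<lambda>_. UNIV)"
          using merge_blk_PiE[OF _ True l(2)] by blast
      qed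
      have "g p = (\<lambda>u. v b (fst p) (merge_blk l u (snd p)) - v b' (fst p) (merge_blk l u (snd p)))"
        using True by (simp add: g_def fun_eq_iff)
      then show ?thesis using continuous_on_diff[OF c[OF bB(1)] c[OF bB(2)]] by simp
    next
      case False
      then show ?thesis unfolding g_def by (simp add: continuous_on_const)
    qed
  qed
  let ?H = "{y \<in> PiE {1..M} (\<lambda>_. UNIV). \<forall>x. v b x y - v b' x y = 0}"
  let ?C = "{y \<in> PiE ({1..l} \<union> {l+1..M}) (\<lambda>_. UNIV). restrict y {1..l} \<in> ?K \<and> restrict y {l+1..M} \<in> PiE {l+1..M} (\<lambda>_. UNIV)}"
  have U: "{1..l} \<union> {l+1..M} = {1..M}" using l by auto
  have CH: "?C \<subseteq> ?H"
  proof
    fix y assume y: "y \<in> ?C"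
    then have yP: "y \<in> PiE {1..M} (\<lambda>_. UNIV)" using U by simp
    have "ident l (restrict y {1..l}) b b'" using y by simp
    then have "\<forall>x. v b x (merge_blk l (restrict y {1..l}) (restrict y {l+1..M}))
                 = v b' x (merge_blk l (restrict y {1..l}) (restrict y {l+1..M}))"
      by (simp add: ident_def)
    then show "y \<in> ?H" using yP merge_blk_restrict[OF yP, of l] by simp
  qed
  have "emeasure (PM ({1..l} \<union> {l+1..M})) ?C = emeasure (PM {1..l}) ?K * emeasure (PM {l+1..M}) (PiE {l+1..M} (\<lambda>_. UNIV))"
    by (rule emeasure_cyl) (use Ks in \<open>auto simp: space_PiM[symmetric]\<close>)
  moreover have "emeasure (PM ({1..l} \<union> {l+1..M})) ?C = 0"
  proof -
    have "emeasure (PM {1..M}) ?C \<le> emeasure (PM {1..M}) ?H"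
      using CH H_sets[OF bB(1,2)] U by (intro emeasure_mono) auto
    then show ?thesis using H_null[OF bB] U by simp
  qed
  ultimately have "emeasure (PM {1..l}) ?K = 0"
    using space_PM_pos[where I="{l+1..M}" and 'x='x] by simp
  then show ?thesis using Ks by simp
qed

lemma Bad_null:
  assumes bB: "b \<in> B" "b' \<in> B" "R b \<noteq> R b'" and l: "1 \<le> l" "l \<le> M" and n0: "M \<le> n0"
  shows "{y \<in> PiE {n0-M+1..n0} (\<lambda>_. UNIV). ident l (\<lambda>j\<in>{1..l}. y (n0-l+j)) b b'} \<in> null_sets (PM {n0-M+1..n0})"
proof -
  let ?K = "{u \<in> PiE {1..l} (\<lambda>_. UNIV). ident l u b b'}"
  have Ks: "?K \<in> sets (PM {1..l})" and K0: "emeasure (PM {1..l}) ?K = 0"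
    using K_null[OF bB l] by auto
  define I1 where "I1 = {n0-M+1..n0-l}"
  define I2 where "I2 = {n0-l+1..n0}"
  have U: "I1 \<union> I2 = {n0-M+1..n0}" and D: "I1 \<inter> I2 = {}" using l n0 by (auto simp: I1_def I2_def)
  define f where "f j = n0 - l + j" for j
  define h where "h u = (\<lambda>j\<in>{1..l}. u (f j))" for u :: "nat \<Rightarrow> 'x"
  have bij: "bij_betw f {1..l} I2"
    by (rule bij_betw_byWitness[where f'="\<lambda>i. i - (n0 - l)"]) (use l n0 in \<open>auto simp: I2_def f_def\<close>)
  have distr: "distr (PM I2) (PM {1..l}) h = PM {1..l}"
    unfolding h_def by (rule distr_PiM_bij[OF _ bij]) simp
  have hm: "h \<in> measurable (PM I2) (PM {1..l})"
    unfolding h_def using bij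
    by (intro measurable_restrict measurable_component_singleton) (auto simp: bij_betw_def)
  define K' where "K' = h -` ?K \<inter> space (PM I2)"
  have K's: "K' \<in> sets (PM I2)" unfolding K'_def using hm Ks by (rule measurable_sets)
  have "emeasure (PM {1..l}) ?K = emeasure (distr (PM I2) (PM {1..l}) h) ?K" using distr by simp
  also have "\<dots> = emeasure (PM I2) K'" unfolding K'_def by (rule emeasure_distr[OF hm Ks])
  finally have K'0: "emeasure (PM I2) K' = 0" using K0 by simp
  let ?Bad = "{y \<in> PiE {n0-M+1..n0} (\<lambda>_. UNIV). ident l (\<lambda>j\<in>{1..l}. y (n0-l+j)) b b'}"
  have hr: "h (restrict y I2) = (\<lambda>j\<in>{1..l}. y (n0-l+j))" for y
    using l n0 by (auto simp: h_def f_def I2_def fun_eq_iff)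
  have Beq: "?Bad = {y \<in> PiE (I1 \<union> I2) (\<lambda>_. UNIV). restrict y I1 \<in> PiE I1 (\<lambda>_. UNIV) \<and> restrict y I2 \<in> K'}"
    unfolding K'_def using U by (auto simp: hr space_PiM)
  have "{y \<in> PiE (I1 \<union> I2) (\<lambda>_. UNIV). restrict y I1 \<in> PiE I1 (\<lambda>_. UNIV) \<and> restrict y I2 \<in> K'} \<in> sets (PM (I1 \<union> I2))"
    by (rule cyl_sets) (use K's in \<open>auto simp: space_PiM[symmetric]\<close>)
  then have Bs: "?Bad \<in> sets (PM {n0-M+1..n0})" using Beq U by simp
  have "emeasure (PM (I1 \<union> I2)) {y \<in> PiE (I1 \<union> I2) (\<lambda>_. UNIV). restrict y I1 \<in> PiE I1 (\<lambda>_. UNIV) \<and> restrict y I2 \<in> K'}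
      = emeasure (PM I1) (PiE I1 (\<lambda>_. UNIV)) * emeasure (PM I2) K'"
    by (rule emeasure_cyl[OF D]) (use K's in \<open>auto simp: I1_def I2_def space_PiM[symmetric]\<close>)
  then have "emeasure (PM {n0-M+1..n0}) ?Bad = 0" using K'0 Beq U by simp
  then show ?thesis using Bs by (simp add: null_sets_def)
qed

lemma G_pos:
  assumes n0: "M \<le> n0" and finB0: "finite B0" and B0B: "B0 \<subseteq> B" and injR: "inj_on R B0"
  shows "{y \<in> PiE {n0-M+1..n0} (\<lambda>_. UNIV). \<forall>b\<in>B0. \<forall>b'\<in>B0. b \<noteq> b' \<longrightarrow>
            (\<forall>l. 1 \<le> l \<longrightarrow> l \<le> M \<longrightarrow> \<not> ident l (\<lambda>j\<in>{1..l}. y (n0-l+j)) b b')} \<in> sets (PM {n0-M+1..n0})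
       \<and> emeasure (PM {n0-M+1..n0}) {y \<in> PiE {n0-M+1..n0} (\<lambda>_. UNIV). \<forall>b\<in>B0. \<forall>b'\<in>B0. b \<noteq> b' \<longrightarrow>
            (\<forall>l. 1 \<le> l \<longrightarrow> l \<le> M \<longrightarrow> \<not> ident l (\<lambda>j\<in>{1..l}. y (n0-l+j)) b b')} > 0"
proof -
  define Bad where "Bad b b' l = {y \<in> PiE {n0-M+1..n0} (\<lambda>_. UNIV). ident l (\<lambda>j\<in>{1..l}. y (n0-l+j)) b b'}" for b b' l
  define NB where "NB = (\<Union>b\<in>B0. \<Union>b'\<in>B0 - {b}. \<Union>l\<in>{1..M}. Bad b b' l)"
  have NBn: "NB \<in> null_sets (PM {n0-M+1..n0})"
    unfolding NB_def Bad_def using finB0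
  proof (intro null_sets.finite_UN)
    fix b b' l assume h: "b \<in> B0" "b' \<in> B0 - {b}" "l \<in> {1..M}"
    then have "R b \<noteq> R b'" using injR by (auto dest: inj_onD)
    then show "{y \<in> PiE {n0-M+1..n0} (\<lambda>_. UNIV). ident l (\<lambda>j\<in>{1..l}. y (n0-l+j)) b b'} \<in> null_sets (PM {n0-M+1..n0})"
      using h B0B n0 by (intro Bad_null) auto
  qed auto
  let ?G = "{y \<in> PiE {n0-M+1..n0} (\<lambda>_. UNIV). \<forall>b\<in>B0. \<forall>b'\<in>B0. b \<noteq> b' \<longrightarrow>
            (\<forall>l. 1 \<le> l \<longrightarrow> l \<le> M \<longrightarrow> \<not> ident l (\<lambda>j\<in>{1..l}. y (n0-l+j)) b b')}"
  have Geq: "?G = space (PM {n0-M+1..n0}) - NB"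
  proof (intro set_eqI iffI)
    fix y assume "y \<in> ?G" then show "y \<in> space (PM {n0-M+1..n0}) - NB" by (auto simp: NB_def Bad_def space_PiM)
  next
    fix y assume y: "y \<in> space (PM {n0-M+1..n0}) - NB"
    show "y \<in> ?G"
    proof (simp only: mem_Collect_eq, intro conjI ballI impI allI)
      show "y \<in> PiE {n0-M+1..n0} (\<lambda>_. UNIV)" using y by (simp add: space_PiM)
      fix b b' l assume "b \<in> B0" "b' \<in> B0" "b \<noteq> b'" "1 \<le> l" "l \<le> M"
      then show "\<not> ident l (\<lambda>j\<in>{1..l}. y (n0-l+j)) b b'" using y by (auto simp: NB_def Bad_def space_PiM)
    qed
  qed
  have "emeasure (PM {n0-M+1..n0}) ?G = emeasure (PM {n0-M+1..n0}) (space (PM {n0-M+1..n0}))"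
    unfolding Geq by (rule emeasure_Diff_null_set[OF NBn]) simp
  also have "\<dots> = \<infinity>"
  proof -
    have "{n0-M+1..n0} \<noteq> {}" using M_pos n0 by auto
    then show ?thesis using space_PM_inf[of "{n0-M+1..n0}"] by (simp add: space_PiM)
  qed
  finally show ?thesis using Geq NBn by auto
qed

end

lemma sum_PiE_split:
  assumes "M \<le> n0" "n0 \<le> T"
  shows "(\<Sum>\<sigma>\<in>PiE {M+1..T} (\<lambda>_. B0). f \<sigma>)
       = (\<Sum>\<sigma>1\<in>PiE {M+1..n0} (\<lambda>_. B0). \<Sum>\<sigma>2\<in>PiE {n0+1..T} (\<lambda>_. B0). f (merge_blk n0 \<sigma>1 \<sigma>2))"
proof -
  have "(\<Sum>\<sigma>1\<in>PiE {M+1..n0} (\<lambda>_. B0). \<Sum>\<sigma>2\<in>PiE {n0+1..T} (\<lambda>_. B0). f (merge_blk n0 \<sigma>1 \<sigma>2))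
      = (\<Sum>p\<in>PiE {M+1..n0} (\<lambda>_. B0) \<times> PiE {n0+1..T} (\<lambda>_. B0). f (merge_blk n0 (fst p) (snd p)))"
    by (simp only: sum.cartesian_product split_def)
  also have "\<dots> = (\<Sum>\<sigma>\<in>PiE {M+1..T} (\<lambda>_. B0). f \<sigma>)"
  proof (rule sum.reindex_bij_witness[where i="\<lambda>\<sigma>. (restrict \<sigma> {M+1..n0}, restrict \<sigma> {n0+1..T})"
        and j="\<lambda>p. merge_blk n0 (fst p) (snd p)"])
    fix p assume p: "p \<in> PiE {M+1..n0} (\<lambda>_. B0) \<times> PiE {n0+1..T} (\<lambda>_. B0)"
    show "(restrict (merge_blk n0 (fst p) (snd p)) {M+1..n0}, restrict (merge_blk n0 (fst p) (snd p)) {n0+1..T}) = p"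
      using p by (cases p) (auto simp: merge_blk_def PiE_iff extensional_def fun_eq_iff)
    show "merge_blk n0 (fst p) (snd p) \<in> PiE {M+1..T} (\<lambda>_. B0)"
      using p assms by (cases p) (auto simp: merge_blk_def PiE_iff extensional_def)
    show "f (merge_blk n0 (fst p) (snd p)) = f (merge_blk n0 (fst p) (snd p))" ..
  next
    fix \<sigma> assume \<sigma>: "\<sigma> \<in> PiE {M+1..T} (\<lambda>_. B0)"
    show "merge_blk n0 (fst (restrict \<sigma> {M+1..n0}, restrict \<sigma> {n0+1..T})) (snd (restrict \<sigma> {M+1..n0}, restrict \<sigma> {n0+1..T})) = \<sigma>"
      using \<sigma> assms by (auto simp: merge_blk_def PiE_iff extensional_def fun_eq_iff)
    show "(restrict \<sigma> {M+1..n0}, restrict \<sigma> {n0+1..T}) \<in> PiE {M+1..n0} (\<lambda>_. B0) \<times> PiE {n0+1..T} (\<lambda>_. B0)"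
      using \<sigma> assms by (auto simp: PiE_iff)
  qed
  finally show ?thesis ..
qed

lemma traj_args: "traj M T pa vb z = pa (restrict z {1..M}) * (\<Prod>t\<in>{M+1..T}. vb t (z t) (args M t z))"
  by (simp add: traj_def args_def)

lemma args_merge_low: "M < t \<Longrightarrow> t \<le> n0 \<Longrightarrow> args M t (merge_blk n0 \<beta> u) = args M t \<beta>"
  by (auto simp: args_def merge_blk_def fun_eq_iff)

lemma traj_split:
  assumes "M \<le> n0" "n0 \<le> T"
  shows "traj M T pa (\<lambda>t. v ((merge_blk n0 \<sigma>1 \<sigma>2) t)) (merge_blk n0 \<beta> u)
       = traj M n0 pa (\<lambda>t. v (\<sigma>1 t)) \<beta> * (\<Prod>t\<in>{n0+1..T}. v (\<sigma>2 t) (u t) (args M t (merge_blk n0 \<beta> u)))"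
proof -
  let ?z = "merge_blk n0 \<beta> u"
  have U: "{M+1..T} = {M+1..n0} \<union> {n0+1..T}" and D: "{M+1..n0} \<inter> {n0+1..T} = {}" using assms by auto
  have r: "restrict ?z {1..M} = restrict \<beta> {1..M}" using assms by (auto simp: merge_blk_def)
  have p1: "(\<Prod>t\<in>{M+1..n0}. v ((merge_blk n0 \<sigma>1 \<sigma>2) t) (?z t) (args M t ?z))
         = (\<Prod>t\<in>{M+1..n0}. v (\<sigma>1 t) (\<beta> t) (args M t \<beta>))"
  proof (rule prod.cong[OF refl])
    fix t assume t: "t \<in> {M+1..n0}"
    have e0: "args M t ?z = args M t \<beta>" using t by (intro args_merge_low) auto
    have e1: "merge_blk n0 \<sigma>1 \<sigma>2 t = \<sigma>1 t" "?z t = \<beta> t" using t by (auto simp: merge_blk_def)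
    show "v ((merge_blk n0 \<sigma>1 \<sigma>2) t) (?z t) (args M t ?z) = v (\<sigma>1 t) (\<beta> t) (args M t \<beta>)"
      by (simp only: e0 e1)
  qed
  have p2: "(\<Prod>t\<in>{n0+1..T}. v ((merge_blk n0 \<sigma>1 \<sigma>2) t) (?z t) (args M t ?z))
         = (\<Prod>t\<in>{n0+1..T}. v (\<sigma>2 t) (u t) (args M t ?z))"
  proof (rule prod.cong[OF refl])
    fix t assume t: "t \<in> {n0+1..T}"
    have e1: "merge_blk n0 \<sigma>1 \<sigma>2 t = \<sigma>2 t" "?z t = u t" using t by (auto simp: merge_blk_def)
    show "v ((merge_blk n0 \<sigma>1 \<sigma>2) t) (?z t) (args M t ?z) = v (\<sigma>2 t) (u t) (args M t ?z)"
      by (simp only: e1)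
  qed
  show ?thesis
    unfolding traj_args r U prod.union_disjoint[OF finite_atLeastAtMost finite_atLeastAtMost D] p1 p2
    by (simp only: mult.assoc)
qed

lemma merge_blk_in:
  "n0 \<le> T \<Longrightarrow> \<beta> \<in> PiE {1..n0} (\<lambda>_. UNIV) \<Longrightarrow> u \<in> PiE {n0+1..T} (\<lambda>_. UNIV) \<Longrightarrow> merge_blk n0 \<beta> u \<in> PiE {1..T} (\<lambda>_. UNIV)"
  by (auto simp: merge_blk_def PiE_iff extensional_def)

lemma merge_blk_restr:
  "u \<in> PiE {n0+1..T} (\<lambda>_. UNIV) \<Longrightarrow> restrict (merge_blk n0 \<beta> u) {n0+1..T} = u"
  by (auto simp: merge_blk_def PiE_iff extensional_def fun_eq_iff)

context vset4
begin

definition Gset :: "nat \<Rightarrow> 'b set \<Rightarrow> (nat \<Rightarrow> 'x) set" where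
  "Gset n0 B0 = {y \<in> PiE {n0-M+1..n0} (\<lambda>_. UNIV). \<forall>b\<in>B0. \<forall>b'\<in>B0. b \<noteq> b' \<longrightarrow>
            (\<forall>l. 1 \<le> l \<longrightarrow> l \<le> M \<longrightarrow> \<not> ident l (\<lambda>j\<in>{1..l}. y (n0-l+j)) b b')}"

lemma reduce:
  fixes p :: "'a \<Rightarrow> (nat \<Rightarrow> 'x) \<Rightarrow> real" and A0 :: "'a set" and B0 :: "'b set"
  assumes finB0: "finite B0" and B0B: "B0 \<subseteq> B"
    and n0: "M \<le> n0" and s: "s \<le> M" and T: "T = n0 + s"
    and Zs: "Z \<in> sets (PM {T-s+1..T})" and Zpos: "emeasure (PM {T-s+1..T}) Z > 0"
    and eq: "\<forall>z\<in>PiE {1..T} (\<lambda>_. UNIV). restrict z {T-s+1..T} \<in> Z \<longrightarrow>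
          (\<Sum>a\<in>A0. \<Sum>\<sigma>\<in>PiE {M+1..T} (\<lambda>_. B0). c a \<sigma> * traj M T (p a) (\<lambda>t. v (\<sigma> t)) z) = 0"
    and \<beta>: "\<beta> \<in> PiE {1..n0} (\<lambda>_. UNIV)" and \<beta>G: "restrict \<beta> {n0-M+1..n0} \<in> Gset n0 B0"
    and \<sigma>2: "\<sigma>2 \<in> PiE {n0+1..T} (\<lambda>_. B0)"
  shows "(\<Sum>a\<in>A0. \<Sum>\<sigma>1\<in>PiE {M+1..n0} (\<lambda>_. B0). c a (merge_blk n0 \<sigma>1 \<sigma>2) * traj M n0 (p a) (\<lambda>t. v (\<sigma>1 t)) \<beta>) = 0"
proof -
  define d where "d \<sigma>2 = (\<Sum>a\<in>A0. \<Sum>\<sigma>1\<in>PiE {M+1..n0} (\<lambda>_. B0). c a (merge_blk n0 \<sigma>1 \<sigma>2) * traj M n0 (p a) (\<lambda>t. v (\<sigma>1 t)) \<beta>)" for \<sigma>2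
  have I: "{T-s+1..T} = {n0+1..n0+s}" using T by auto
  have nT: "n0 \<le> T" using T by simp
  have "\<forall>\<sigma>\<in>PiE {n0+1..n0+s} (\<lambda>_. B0). d \<sigma> = 0"
  proof (rule block[OF n0 finB0 B0B \<beta> s])
    show "\<forall>b\<in>B0. \<forall>b'\<in>B0. b \<noteq> b' \<longrightarrow> (\<forall>l. M - s < l \<longrightarrow> l \<le> M \<longrightarrow> \<not> ident l (\<lambda>j\<in>{1..l}. \<beta> (n0-l+j)) b b')"
    proof (intro ballI impI allI)
      fix b b' l assume h: "b \<in> B0" "b' \<in> B0" "b \<noteq> b'" "M - s < l" "l \<le> M"
      have "(\<lambda>j\<in>{1..l}. (restrict \<beta> {n0-M+1..n0}) (n0-l+j)) = (\<lambda>j\<in>{1..l}. \<beta> (n0-l+j))"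
        using h n0 by (auto simp: fun_eq_iff)
      moreover have "1 \<le> l" using h by simp
      moreover have "\<not> ident l (\<lambda>j\<in>{1..l}. (restrict \<beta> {n0-M+1..n0}) (n0-l+j)) b b'"
        using \<beta>G h \<open>1 \<le> l\<close> unfolding Gset_def by blast
      ultimately show "\<not> ident l (\<lambda>j\<in>{1..l}. \<beta> (n0-l+j)) b b'"
        by simp
    qed
    show "Z \<in> sets (PM {n0+1..n0+s})" unfolding I[symmetric] by (rule Zs)
    show "emeasure (PM {n0+1..n0+s}) Z > 0" unfolding I[symmetric] by (rule Zpos)
    show "\<forall>u\<in>Z. (\<Sum>\<sigma>\<in>PiE {n0+1..n0+s} (\<lambda>_. B0). d \<sigma> *
          (\<Prod>t\<in>{n0+1..n0+s}. v (\<sigma> t) (u t) (args M t (merge_blk n0 \<beta> u)))) = 0"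
    proof
      fix u assume u: "u \<in> Z"
      have uP: "u \<in> PiE {n0+1..T} (\<lambda>_. UNIV)"
        using sets.sets_into_space[OF Zs] u I T by (auto simp: space_PiM)
      let ?z = "merge_blk n0 \<beta> u"
      have zP: "?z \<in> PiE {1..T} (\<lambda>_. UNIV)" by (rule merge_blk_in[OF _ \<beta> uP]) (simp add: T)
      have "restrict ?z {T-s+1..T} = u" using merge_blk_restr[OF uP] I T by simp
      then have "restrict ?z {T-s+1..T} \<in> Z" using u by simp
      then have "0 = (\<Sum>a\<in>A0. \<Sum>\<sigma>\<in>PiE {M+1..T} (\<lambda>_. B0). c a \<sigma> * traj M T (p a) (\<lambda>t. v (\<sigma> t)) ?z)"
        using eq[rule_format, OF zP] by (simp only: eq_commute)
      also have "\<dots> = (\<Sum>a\<in>A0. \<Sum>\<sigma>1\<in>PiE {M+1..n0} (\<lambda>_. B0). \<Sum>\<sigma>2\<in>PiE {n0+1..T} (\<lambda>_. B0).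
             c a (merge_blk n0 \<sigma>1 \<sigma>2) * (traj M n0 (p a) (\<lambda>t. v (\<sigma>1 t)) \<beta> *
               (\<Prod>t\<in>{n0+1..T}. v (\<sigma>2 t) (u t) (args M t ?z))))"
      proof (rule sum.cong[OF refl])
        fix a assume "a \<in> A0"
        show "(\<Sum>\<sigma>\<in>PiE {M+1..T} (\<lambda>_. B0). c a \<sigma> * traj M T (p a) (\<lambda>t. v (\<sigma> t)) ?z)
          = (\<Sum>\<sigma>1\<in>PiE {M+1..n0} (\<lambda>_. B0). \<Sum>\<sigma>2\<in>PiE {n0+1..T} (\<lambda>_. B0).
             c a (merge_blk n0 \<sigma>1 \<sigma>2) * (traj M n0 (p a) (\<lambda>t. v (\<sigma>1 t)) \<beta> *
               (\<Prod>t\<in>{n0+1..T}. v (\<sigma>2 t) (u t) (args M t ?z))))"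
          by (simp only: sum_PiE_split[OF n0 nT] traj_split[OF n0 nT])
      qed
      also have "\<dots> = (\<Sum>a\<in>A0. \<Sum>\<sigma>2\<in>PiE {n0+1..T} (\<lambda>_. B0). \<Sum>\<sigma>1\<in>PiE {M+1..n0} (\<lambda>_. B0).
             c a (merge_blk n0 \<sigma>1 \<sigma>2) * (traj M n0 (p a) (\<lambda>t. v (\<sigma>1 t)) \<beta> *
               (\<Prod>t\<in>{n0+1..T}. v (\<sigma>2 t) (u t) (args M t ?z))))"
        by (rule sum.cong[OF refl]) (rule sum.swap)
      also have "\<dots> = (\<Sum>\<sigma>2\<in>PiE {n0+1..T} (\<lambda>_. B0). \<Sum>a\<in>A0. \<Sum>\<sigma>1\<in>PiE {M+1..n0} (\<lambda>_. B0).
             c a (merge_blk n0 \<sigma>1 \<sigma>2) * (traj M n0 (p a) (\<lambda>t. v (\<sigma>1 t)) \<beta> *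
               (\<Prod>t\<in>{n0+1..T}. v (\<sigma>2 t) (u t) (args M t ?z))))"
        by (rule sum.swap)
      also have "\<dots> = (\<Sum>\<sigma>2\<in>PiE {n0+1..T} (\<lambda>_. B0). d \<sigma>2 * (\<Prod>t\<in>{n0+1..T}. v (\<sigma>2 t) (u t) (args M t ?z)))"
        by (simp add: d_def sum_distrib_right mult.assoc)
      finally show "(\<Sum>\<sigma>\<in>PiE {n0+1..n0+s} (\<lambda>_. B0). d \<sigma> *
          (\<Prod>t\<in>{n0+1..n0+s}. v (\<sigma> t) (u t) (args M t ?z))) = 0" using T by simp
    qed
  qed
  then show ?thesis using \<sigma>2 T by (simp add: d_def)
qed

end

lemma merge_restrict_split:
  "\<sigma> \<in> PiE {M+1..T} X \<Longrightarrow> M \<le> n0 \<Longrightarrow> n0 \<le> T \<Longrightarrow> merge_blk n0 (restrict \<sigma> {M+1..n0}) (restrict \<sigma> {n0+1..T}) = \<sigma>"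
  by (auto simp: merge_blk_def PiE_iff extensional_def fun_eq_iff)

context vset4
begin

lemma main:
  fixes p :: "'a \<Rightarrow> (nat \<Rightarrow> 'x) \<Rightarrow> real" and A A0 :: "'a set" and B0 :: "'b set"
  assumes c1: "\<forall>Y. pos_meas (Leb {1..M}) Y \<longrightarrow> lin_indep_fm ((\<lambda>a. restrict (p a) (PiE {1..M} (\<lambda>_. UNIV))) ` A) Y"
    and finA0: "finite A0" and A0A: "A0 \<subseteq> A" and injP: "inj_on (\<lambda>a. restrict (p a) (PiE {1..M} (\<lambda>_. UNIV))) A0"
    and finB0: "finite B0" and B0B: "B0 \<subseteq> B" and injR: "inj_on R B0"
  shows "1 \<le> k \<Longrightarrow> \<forall>s T Z c. 1 \<le> s \<longrightarrow> s \<le> M \<longrightarrow> T = k*M + s \<longrightarrow> Z \<in> sets (PM {T-s+1..T}) \<longrightarrow>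
     emeasure (PM {T-s+1..T}) Z > 0 \<longrightarrow>
    (\<forall>z\<in>PiE {1..T} (\<lambda>_. UNIV). restrict z {T-s+1..T} \<in> Z \<longrightarrow>
        (\<Sum>a\<in>A0. \<Sum>\<sigma>\<in>PiE {M+1..T} (\<lambda>_. B0). c a \<sigma> * traj M T (p a) (\<lambda>t. v (\<sigma> t)) z) = 0) \<longrightarrow>
    (\<forall>a\<in>A0. \<forall>\<sigma>\<in>PiE {M+1..T} (\<lambda>_. B0). c a \<sigma> = 0)"
proof (induction k rule: nat_induct_at_least)
  case base
  show ?case
  proof (intro allI impI)
    fix s T Z c
    assume s1: "1 \<le> s" and sM: "s \<le> M" and T: "T = 1*M + s" and Zs: "Z \<in> sets (PM {T-s+1..T})"
      and Zpos: "emeasure (PM {T-s+1..T}) Z > 0"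
      and eq: "\<forall>z\<in>PiE {1..T} (\<lambda>_. UNIV). restrict z {T-s+1..T} \<in> Z \<longrightarrow>
        (\<Sum>a\<in>A0. \<Sum>\<sigma>\<in>PiE {M+1..T} (\<lambda>_. B0). c a \<sigma> * traj M T (p a) (\<lambda>t. v (\<sigma> t)) z) = 0"
    have T': "T = M + s" using T by simp
    let ?P = "\<lambda>a. restrict (p a) (PiE {1..M} (\<lambda>_. UNIV))"
    let ?G = "Gset M B0"
    have MM: "{M-M+1..M} = {1..M}" by simp
    have Gs: "?G \<in> sets (PM {1..M})" and Gpos: "emeasure (PM {1..M}) ?G > 0"
      using G_pos[OF order.refl finB0 B0B injR] unfolding Gset_def MM by auto
    have GP: "?G \<subseteq> PiE {1..M} (\<lambda>_. UNIV)" unfolding Gset_def MM by auto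
    have li: "lin_indep_fm (?P ` A) ?G"
      using c1 pos_meas_LebI[OF Gs Gpos] by blast
    have und: "PiE {M+1..M} (\<lambda>_. B0) = {\<lambda>_. undefined}" by simp
    have zero2: "c a (merge_blk M (\<lambda>_. undefined) \<sigma>2) = 0" if a: "a \<in> A0" and \<sigma>2: "\<sigma>2 \<in> PiE {M+1..T} (\<lambda>_. B0)" for a \<sigma>2
    proof -
      have inv: "inv_into A0 ?P (?P a') = a'" if "a' \<in> A0" for a'
        by (rule inv_into_f_f[OF injP that])
      define cc where "cc f = c (inv_into A0 ?P f) (merge_blk M (\<lambda>_. undefined) \<sigma>2)" for f
      have red: "(\<Sum>a\<in>A0. c a (merge_blk M (\<lambda>_. undefined) \<sigma>2) * p a \<beta>) = 0" if \<beta>: "\<beta> \<in> ?G" for \<beta>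
      proof -
        have \<beta>P: "\<beta> \<in> PiE {1..M} (\<lambda>_. UNIV)" using \<beta> GP by auto
        have r: "restrict \<beta> {M-M+1..M} = \<beta>" using \<beta>P MM by (simp add: PiE_restrict)
        have "(\<Sum>a\<in>A0. \<Sum>\<sigma>1\<in>PiE {M+1..M} (\<lambda>_. B0). c a (merge_blk M \<sigma>1 \<sigma>2) * traj M M (p a) (\<lambda>t. v (\<sigma>1 t)) \<beta>) = 0"
          by (rule reduce[OF finB0 B0B order.refl sM T' Zs Zpos eq \<beta>P _ \<sigma>2]) (simp only: r \<beta>)
        moreover have "traj M M (p a) vb \<beta> = p a \<beta>" for a vb
          using \<beta>P by (simp add: traj_def PiE_restrict)
        ultimately show ?thesis by simp
      qed
      have "cc (?P a) = 0"
      proof (rule li[unfolded lin_indep_fm_def, rule_format, of "?P ` A0" cc "?P a"])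
        show "?P a \<in> ?P ` A0" using a by simp
        show "?P ` A0 \<subseteq> ?P ` A" using A0A by auto
        show "finite (?P ` A0)" using finA0 by simp
        fix \<beta> assume \<beta>: "\<beta> \<in> ?G"
        have \<beta>P: "\<beta> \<in> PiE {1..M} (\<lambda>_. UNIV)" using \<beta> GP by auto
        have "(\<Sum>f\<in>?P ` A0. cc f * f \<beta>) = (\<Sum>a\<in>A0. cc (?P a) * ?P a \<beta>)"
          by (rule sum.reindex[OF injP, unfolded o_def])
        also have "\<dots> = (\<Sum>a\<in>A0. c a (merge_blk M (\<lambda>_. undefined) \<sigma>2) * p a \<beta>)"
        proof (rule sum.cong[OF refl])
          fix a' assume a': "a' \<in> A0"
          have "?P a' \<beta> = p a' \<beta>" using \<beta>P by simp
          then show "cc (?P a') * ?P a' \<beta> = c a' (merge_blk M (\<lambda>_. undefined) \<sigma>2) * p a' \<beta>"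
            unfolding cc_def inv[OF a'] by simp
        qed
        also have "\<dots> = 0" by (rule red[OF \<beta>])
        finally show "(\<Sum>f\<in>?P ` A0. cc f * f \<beta>) = 0" .
      qed
      then show ?thesis unfolding cc_def inv[OF a] .
    qed
    show "\<forall>a\<in>A0. \<forall>\<sigma>\<in>PiE {M+1..T} (\<lambda>_. B0). c a \<sigma> = 0"
    proof (intro ballI)
      fix a \<sigma> assume a: "a \<in> A0" and \<sigma>: "\<sigma> \<in> PiE {M+1..T} (\<lambda>_. B0)"
      have "merge_blk M (\<lambda>_. undefined) \<sigma> = \<sigma>"
        using \<sigma> by (auto simp: merge_blk_def PiE_iff extensional_def fun_eq_iff)
      then show "c a \<sigma> = 0" using zero2[OF a \<sigma>] by simp
    qed
  qed
next
  case (Suc k)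
  show ?case
  proof (intro allI impI)
    fix s T Z c
    assume s1: "1 \<le> s" and sM: "s \<le> M" and T: "T = Suc k*M + s" and Zs: "Z \<in> sets (PM {T-s+1..T})"
      and Zpos: "emeasure (PM {T-s+1..T}) Z > 0"
      and eq: "\<forall>z\<in>PiE {1..T} (\<lambda>_. UNIV). restrict z {T-s+1..T} \<in> Z \<longrightarrow>
        (\<Sum>a\<in>A0. \<Sum>\<sigma>\<in>PiE {M+1..T} (\<lambda>_. B0). c a \<sigma> * traj M T (p a) (\<lambda>t. v (\<sigma> t)) z) = 0"
    define n0 where "n0 = Suc k * M"
    have T': "T = n0 + s" using T by (simp add: n0_def)
    have n0M: "M \<le> n0" by (simp add: n0_def)
    have n0T: "n0 \<le> T" using T' by simp
    have n0k: "n0 = k * M + M" by (simp add: n0_def)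
    have Gs: "Gset n0 B0 \<in> sets (PM {n0-M+1..n0})" and Gpos: "emeasure (PM {n0-M+1..n0}) (Gset n0 B0) > 0"
      using G_pos[OF n0M finB0 B0B injR] unfolding Gset_def by auto
    have zero2: "c a (merge_blk n0 \<sigma>1 \<sigma>2) = 0"
      if a: "a \<in> A0" and \<sigma>1: "\<sigma>1 \<in> PiE {M+1..n0} (\<lambda>_. B0)" and \<sigma>2: "\<sigma>2 \<in> PiE {n0+1..T} (\<lambda>_. B0)" for a \<sigma>1 \<sigma>2
    proof -
      show ?thesis
      proof (rule Suc.IH[rule_format, of M n0 "Gset n0 B0" "\<lambda>a \<sigma>1. c a (merge_blk n0 \<sigma>1 \<sigma>2)" a \<sigma>1])
        show "a \<in> A0" by (fact a)
        show "\<sigma>1 \<in> PiE {M+1..n0} (\<lambda>_. B0)" by (fact \<sigma>1)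
        show "1 \<le> M" using M_pos by simp
        show "M \<le> M" by simp
        show "n0 = k * M + M" by (fact n0k)
        show "Gset n0 B0 \<in> sets (PM {n0-M+1..n0})" by (fact Gs)
        show "emeasure (PM {n0-M+1..n0}) (Gset n0 B0) > 0" by (fact Gpos)
        fix \<beta> assume \<beta>: "\<beta> \<in> PiE {1..n0} (\<lambda>_. UNIV)" and \<beta>G: "restrict \<beta> {n0-M+1..n0} \<in> Gset n0 B0"
        show "(\<Sum>a\<in>A0. \<Sum>\<sigma>1\<in>PiE {M+1..n0} (\<lambda>_. B0). c a (merge_blk n0 \<sigma>1 \<sigma>2) * traj M n0 (p a) (\<lambda>t. v (\<sigma>1 t)) \<beta>) = 0"
          by (rule reduce[OF finB0 B0B n0M sM T' Zs Zpos eq \<beta> \<beta>G \<sigma>2])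
      qed
    qed
    show "\<forall>a\<in>A0. \<forall>\<sigma>\<in>PiE {M+1..T} (\<lambda>_. B0). c a \<sigma> = 0"
    proof (intro ballI)
      fix a \<sigma> assume a: "a \<in> A0" and \<sigma>: "\<sigma> \<in> PiE {M+1..T} (\<lambda>_. B0)"
      have "restrict \<sigma> {M+1..n0} \<in> PiE {M+1..n0} (\<lambda>_. B0)" "restrict \<sigma> {n0+1..T} \<in> PiE {n0+1..T} (\<lambda>_. B0)"
        using \<sigma> n0M n0T by (auto simp: PiE_iff)
      from zero2[OF a this] show "c a \<sigma> = 0"
        by (simp only: merge_restrict_split[OF \<sigma> n0M n0T])
    qed
  qed
qed

end

lemma inj_rep:
  assumes "finite X"
  obtains X0 where "X0 \<subseteq> X" "finite X0" "inj_on h X0" "\<And>x. x \<in> X \<Longrightarrow> inv_into X h (h x) \<in> X0"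
    "\<And>x. x \<in> X \<Longrightarrow> h (inv_into X h (h x)) = h x"
proof
  let ?X0 = "inv_into X h ` h ` X"
  show "?X0 \<subseteq> X" by (auto intro: inv_into_into)
  show "finite ?X0" using assms by simp
  show "inj_on h ?X0" by (auto simp: inj_on_def f_inv_into_f)
  show "\<And>x. x \<in> X \<Longrightarrow> inv_into X h (h x) \<in> ?X0" by auto
  show "\<And>x. x \<in> X \<Longrightarrow> h (inv_into X h (h x)) = h x" by (auto simp: f_inv_into_f)
qed

lemma (in vset4) traj_cong:
  assumes z: "z \<in> PiE {1..T} (\<lambda>_. UNIV)"
    and Pa: "restrict (p a) (PiE {1..M} (\<lambda>_. UNIV)) = restrict (p a') (PiE {1..M} (\<lambda>_. UNIV))"
    and Rb: "\<forall>t\<in>{M+1..T}. R (bs t) = R (bs' t)"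
  shows "traj M T (p a) (\<lambda>t. v (bs t)) z = traj M T (p a') (\<lambda>t. v (bs' t)) z"
proof -
  have rz: "restrict z {1..M} \<in> PiE {1..M} (\<lambda>_. UNIV)" by simp
  have "p a (restrict z {1..M}) = p a' (restrict z {1..M})"
    using fun_cong[OF Pa, of "restrict z {1..M}"] rz by (simp only: restrict_apply' )
  moreover have "(\<Prod>t\<in>{M+1..T}. v (bs t) (z t) (args M t z)) = (\<Prod>t\<in>{M+1..T}. v (bs' t) (z t) (args M t z))"
  proof (rule prod.cong[OF refl])
    fix t assume t: "t \<in> {M+1..T}"
    have "R (bs t) (z t, args M t z) = R (bs' t) (z t, args M t z)" using Rb t by simp
    then show "v (bs t) (z t) (args M t z) = v (bs' t) (z t) (args M t z)"
      using args_PiE[of M t z] by (simp add: R_def)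
  qed
  ultimately show ?thesis by (simp add: traj_args)
qed

theorem theorem4:
  fixes M T :: nat
    and A :: "'a set" and p :: "'a \<Rightarrow> (nat \<Rightarrow> real ^ 'm) \<Rightarrow> real"
    and B :: "'b set" and v :: "'b \<Rightarrow> real ^ 'm \<Rightarrow> (nat \<Rightarrow> real ^ 'm) \<Rightarrow> real"
    and Zr :: "(nat \<Rightarrow> real ^ 'm) set"
  assumes M_pos: "0 < M"
    \<comment> \<open>p_a are densities on R^{mM}\<close>
    and dens_p: "\<forall>a\<in>A. p a \<in> borel_measurable (PiM {1..M} (\<lambda>_. lborel))
                     \<and> (\<integral>\<^sup>+ y. ennreal (p a y) \<partial>(PiM {1..M} (\<lambda>_. lborel))) = 1"
    \<comment> \<open>p_b are conditional densities\<close>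
    and dens_v: "\<forall>b\<in>B. \<forall>y\<in>PiE {1..M} (\<lambda>_. UNIV).
                     (\<lambda>z. v b z y) \<in> borel_measurable lborel
                     \<and> (\<integral>\<^sup>+ z. ennreal (v b z y) \<partial>lborel) = 1"
    \<comment> \<open>(c1)\<close>
    and c1_pos: "\<forall>a\<in>A. \<forall>y\<in>PiE {1..M} (\<lambda>_. UNIV). p a y > 0"
    and c1_indep: "\<forall>Y. pos_meas (Leb {1..M}) Y \<longrightarrow>
                     lin_indep_fm ((\<lambda>a. restrict (p a) (PiE {1..M} (\<lambda>_. UNIV))) ` A) Y"
    \<comment> \<open>(b1)\<close>
    and b1: "\<forall>b\<in>B. \<forall>z. \<forall>y\<in>PiE {1..M} (\<lambda>_. UNIV). v b z y > 0"
    \<comment> \<open>(b4)\<close>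
    and b4: "\<exists>Y. full_meas (Leb {1..M}) Y \<and>
               (\<forall>Y' Z. Y' \<subseteq> Y \<longrightarrow> pos_meas (Leb {1..M}) Y' \<longrightarrow> pos_meas lebesgue Z \<longrightarrow>
                  lin_indep_fm
                    ((\<lambda>b. restrict (\<lambda>(z, y). v b z y) (UNIV \<times> PiE {1..M} (\<lambda>_. UNIV))) ` B)
                    (Z \<times> Y'))"
    \<comment> \<open>(b5)\<close>
    and b5: "\<forall>l beta Z Y B0 c. 1 \<le> l \<longrightarrow> l \<le> M \<longrightarrow> beta \<in> PiE {1..l} (\<lambda>_. UNIV) \<longrightarrow>
               pos_meas lebesgue Z \<longrightarrow> pos_meas (Leb {l+1..M}) Y \<longrightarrow>
               finite B0 \<longrightarrow> B0 \<subseteq> B \<longrightarrow>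
               (\<exists>b\<in>B0. c b \<noteq> (0::real)) \<longrightarrow>
               (\<forall>z\<in>Z. \<forall>y\<in>Y. (\<Sum>b\<in>B0. c b * v b z (merge_blk l beta y)) = 0) \<longrightarrow>
               (\<exists>b\<in>B0. \<exists>b'\<in>B0. b \<noteq> b' \<and>
                  (\<forall>z. \<forall>y\<in>PiE {l+1..M} (\<lambda>_. UNIV).
                     v b z (merge_blk l beta y) = v b' z (merge_blk l beta y)))"
    \<comment> \<open>(b6)\<close>
    and b6: "\<forall>b\<in>B. \<forall>z. continuous_on (PiE {1..M} (\<lambda>_. UNIV)) (\<lambda>y. v b z y)"
    and T_gt: "M < T"
    and Zr: "pos_meas (Leb {T - (if T mod M = 0 then M else T mod M) + 1..T}) Zr"
  shows "lin_indep_fm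
           ((\<lambda>(a, bs). restrict (traj M T (p a) (\<lambda>t. v (bs t))) (PiE {1..T} (\<lambda>_. UNIV)))
              ` (A \<times> {bs. \<forall>t\<in>{M+1..T}. bs t \<in> B}))
           {z \<in> PiE {1..T} (\<lambda>_. UNIV).
              restrict z {T - (if T mod M = 0 then M else T mod M) + 1..T} \<in> Zr}"
proof -
  interpret V: vset4 M B v
    by unfold_locales (fact M_pos, fact b5, fact b6, fact b4)
  define r where "r = (if T mod M = 0 then M else T mod M)"
  let ?I = "{T - r + 1..T}"
  let ?P = "\<lambda>a. restrict (p a) (PiE {1..M} (\<lambda>_. UNIV))"
  have r1: "1 \<le> r" and rM: "r \<le> M" using M_pos by (auto simp: r_def)
  obtain k where k1: "1 \<le> k" and Tk: "T = k * M + r"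
  proof (cases "T mod M = 0")
    case True
    have TM: "T = (T div M) * M" using True by (metis div_mult_mod_eq add_0_right)
    have "T div M \<ge> 2"
    proof (rule ccontr)
      assume "\<not> T div M \<ge> 2"
      then have "T div M \<le> 1" by simp
      then have "(T div M) * M \<le> 1 * M" by (rule mult_right_mono) simp
      then show False using TM T_gt by simp
    qed
    have q1: "(T div M - 1) * M + M = (T div M) * M" using \<open>T div M \<ge> 2\<close> by (cases "T div M") auto
    have "1 \<le> T div M - 1" "T = (T div M - 1) * M + r"
      using \<open>T div M \<ge> 2\<close> TM True q1 by (simp_all add: r_def)
    then show ?thesis using that by blast
  next
    case False
    have "T div M \<ge> 1" using div_le_mono[of M T M] T_gt M_pos by simp
    moreover have "T = (T div M) * M + r" using False by (simp add: r_def)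
    ultimately show ?thesis using that by blast
  qed
  have Zr': "Zr \<in> sets (completion (V.PM ?I))" "emeasure (completion (V.PM ?I)) Zr > 0"
    using Zr by (auto simp: pos_meas_def Leb_def r_def)
  define Zb where "Zb = main_part (V.PM ?I) Zr"
  have Zbs: "Zb \<in> sets (V.PM ?I)" unfolding Zb_def using Zr'(1) by (rule main_part_sets)
  have Zbpos: "emeasure (V.PM ?I) Zb > 0" using Zr' unfolding Zb_def by simp
  have ZbZr: "Zb \<subseteq> Zr" unfolding Zb_def using main_part_null_part_Un[OF Zr'(1)] by blast
  show ?thesis
    unfolding lin_indep_fm_def r_def[symmetric]
  proof (intro allI impI)
    fix S c
    assume Ssub: "S \<subseteq> (\<lambda>(a, bs). restrict (traj M T (p a) (\<lambda>t. v (bs t))) (PiE {1..T} (\<lambda>_. UNIV))) `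
              (A \<times> {bs. \<forall>t\<in>{M+1..T}. bs t \<in> B})"
      and finS: "finite S"
      and eqS: "\<forall>x\<in>{z \<in> PiE {1..T} (\<lambda>_. UNIV). restrict z ?I \<in> Zr}. (\<Sum>f\<in>S. c f * f x) = 0"
    have "\<forall>f\<in>S. \<exists>q. q \<in> A \<times> {bs. \<forall>t\<in>{M+1..T}. bs t \<in> B} \<and>
        f = (\<lambda>(a, bs). restrict (traj M T (p a) (\<lambda>t. v (bs t))) (PiE {1..T} (\<lambda>_. UNIV))) q"
      using Ssub by blast
    from bchoice[OF this] obtain g where g: "\<forall>f\<in>S. g f \<in> A \<times> {bs. \<forall>t\<in>{M+1..T}. bs t \<in> B} \<and>
        f = (\<lambda>(a, bs). restrict (traj M T (p a) (\<lambda>t. v (bs t))) (PiE {1..T} (\<lambda>_. UNIV))) (g f)"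
      by (elim exE)
    have gA: "fst (g f) \<in> A" and gB: "\<forall>t\<in>{M+1..T}. snd (g f) t \<in> B"
      and gf: "f = restrict (traj M T (p (fst (g f))) (\<lambda>t. v (snd (g f) t))) (PiE {1..T} (\<lambda>_. UNIV))"
      if "f \<in> S" for f
      using g that by (auto simp: case_prod_beta)
    define A1 where "A1 = fst ` g ` S"
    define B1 where "B1 = (\<Union>f\<in>S. snd (g f) ` {M+1..T})"
    have finA1: "finite A1" and finB1: "finite B1" using finS by (auto simp: A1_def B1_def)
    have A1A: "A1 \<subseteq> A" and B1B: "B1 \<subseteq> B" using gA gB by (auto simp: A1_def B1_def)
    obtain A0 where A0A1: "A0 \<subseteq> A1" and finA0: "finite A0" and injP: "inj_on ?P A0"
      and A0in: "\<And>x. x \<in> A1 \<Longrightarrow> inv_into A1 ?P (?P x) \<in> A0"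
      and A0eq: "\<And>x. x \<in> A1 \<Longrightarrow> ?P (inv_into A1 ?P (?P x)) = ?P x"
      using inj_rep[OF finA1, of ?P] by blast
    obtain B0 where B0B1: "B0 \<subseteq> B1" and finB0: "finite B0" and injR: "inj_on V.R B0"
      and B0in: "\<And>x. x \<in> B1 \<Longrightarrow> inv_into B1 V.R (V.R x) \<in> B0"
      and B0eq: "\<And>x. x \<in> B1 \<Longrightarrow> V.R (inv_into B1 V.R (V.R x)) = V.R x"
      using inj_rep[OF finB1, of V.R] by blast
    define af where "af f = inv_into A1 ?P (?P (fst (g f)))" for f
    define \<sigma>f where "\<sigma>f f = (\<lambda>t\<in>{M+1..T}. inv_into B1 V.R (V.R (snd (g f) t)))" for f
    define tup where "tup f = (af f, \<sigma>f f)" for f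
    have fA1: "fst (g f) \<in> A1" if "f \<in> S" for f using that by (auto simp: A1_def)
    have fB1: "snd (g f) t \<in> B1" if "f \<in> S" "t \<in> {M+1..T}" for f t unfolding B1_def using that by blast
    have tupin: "af f \<in> A0" "\<sigma>f f \<in> PiE {M+1..T} (\<lambda>_. B0)" if "f \<in> S" for f
      using A0in[OF fA1[OF that]] B0in[OF fB1[OF that]] by (auto simp: af_def \<sigma>f_def)
    have frep: "f z = traj M T (p (af f)) (\<lambda>t. v (\<sigma>f f t)) z"
      if f: "f \<in> S" and z: "z \<in> PiE {1..T} (\<lambda>_. UNIV)" for f z
    proof -
      have "f z = traj M T (p (fst (g f))) (\<lambda>t. v (snd (g f) t)) z"
        using gf[OF f] z by (metis restrict_apply')
      also have "\<dots> = traj M T (p (af f)) (\<lambda>t. v (\<sigma>f f t)) z"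
      proof (rule V.traj_cong[OF z])
        show "?P (fst (g f)) = ?P (af f)" using A0eq[OF fA1[OF f]] by (simp add: af_def)
        show "\<forall>t\<in>{M+1..T}. V.R (snd (g f) t) = V.R (\<sigma>f f t)"
          using B0eq[OF fB1[OF f]] by (simp add: \<sigma>f_def)
      qed
      finally show ?thesis .
    qed
    have tupinj: "inj_on tup S"
    proof (rule inj_onI)
      fix f f' assume f: "f \<in> S" and f': "f' \<in> S" and eq: "tup f = tup f'"
      show "f = f'"
      proof
        fix z
        show "f z = f' z"
        proof (cases "z \<in> PiE {1..T} (\<lambda>_. UNIV)")
          case True
          then show ?thesis using frep[OF f True] frep[OF f' True] eq by (simp add: tup_def)
        next
          case False
          then show ?thesis using gf[OF f] gf[OF f'] by (metis restrict_apply)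
        qed
      qed
    qed
    define C where "C a \<sigma> = (if (a, \<sigma>) \<in> tup ` S then c (inv_into S tup (a, \<sigma>)) else 0)" for a \<sigma>
    have Ctup: "C (af f) (\<sigma>f f) = c f" if "f \<in> S" for f
      using that inv_into_f_f[OF tupinj that] by (auto simp: C_def tup_def)
    have eqC: "\<forall>z\<in>PiE {1..T} (\<lambda>_. UNIV). restrict z {T-r+1..T} \<in> Zb \<longrightarrow>
        (\<Sum>a\<in>A0. \<Sum>\<sigma>\<in>PiE {M+1..T} (\<lambda>_. B0). C a \<sigma> * traj M T (p a) (\<lambda>t. v (\<sigma> t)) z) = 0"
    proof (intro ballI impI)
      fix z assume z: "z \<in> PiE {1..T} (\<lambda>_. UNIV)" and zZ: "restrict z {T-r+1..T} \<in> Zb"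
      let ?h = "\<lambda>q. C (fst q) (snd q) * traj M T (p (fst q)) (\<lambda>t. v (snd q t)) z"
      have "(\<Sum>a\<in>A0. \<Sum>\<sigma>\<in>PiE {M+1..T} (\<lambda>_. B0). C a \<sigma> * traj M T (p a) (\<lambda>t. v (\<sigma> t)) z)
          = (\<Sum>q\<in>A0 \<times> PiE {M+1..T} (\<lambda>_. B0). ?h q)"
        by (simp only: sum.cartesian_product split_def)
      also have "\<dots> = (\<Sum>q\<in>tup ` S. ?h q)"
      proof (rule sum.mono_neutral_right)
        show "finite (A0 \<times> PiE {M+1..T} (\<lambda>_. B0))" using finA0 finB0 by (simp add: finite_PiE)
        show "tup ` S \<subseteq> A0 \<times> PiE {M+1..T} (\<lambda>_. B0)" using tupin by (auto simp: tup_def)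
        show "\<forall>q\<in>A0 \<times> PiE {M+1..T} (\<lambda>_. B0) - tup ` S. ?h q = 0"
          by (auto simp: C_def)
      qed
      also have "\<dots> = (\<Sum>f\<in>S. ?h (tup f))"
        by (rule sum.reindex[OF tupinj, unfolded o_def])
      also have "\<dots> = (\<Sum>f\<in>S. c f * f z)"
        using Ctup frep z by (intro sum.cong refl) (simp add: tup_def)
      also have "\<dots> = 0" using eqS z zZ ZbZr by auto
      finally show "(\<Sum>a\<in>A0. \<Sum>\<sigma>\<in>PiE {M+1..T} (\<lambda>_. B0). C a \<sigma> * traj M T (p a) (\<lambda>t. v (\<sigma> t)) z) = 0" .
    qed
    have A0A: "A0 \<subseteq> A" and B0B: "B0 \<subseteq> B" using A0A1 A1A B0B1 B1B by auto
    have C0: "C a \<sigma> = 0" if "a \<in> A0" "\<sigma> \<in> PiE {M+1..T} (\<lambda>_. B0)" for a \<sigma>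
      by (rule V.main[OF c1_indep finA0 A0A injP finB0 B0B injR k1, rule_format, OF r1 rM Tk Zbs Zbpos eqC[rule_format] that])
    show "\<forall>f\<in>S. c f = 0"
    proof
      fix f assume f: "f \<in> S"
      show "c f = 0" using C0 tupin[OF f] Ctup[OF f] by simp
    qed
  qed
qed

end
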